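(* The Hilbert series of the coordinate ring of the cone of ${\mathrm{SO}}(4)$ is \[\mathrm{H}(\mathcal{O}(\mathcal{C}({\mathrm{SO}}(4)));t)=\frac{1+9t+9t^2+t^3}{(1-t)^7}.\]
   Context: ${\mathrm{SO}}(4)=\{M\in\mathbb{C}^{4\times4}\mid M^TM=I,\ \det M=1\}$. The cone $\mathcal{C}({\mathrm{SO}}(4))$ is the Zariski closure in $\mathbb{C}^{4\times 4}$ of $\{cM\mid c\in\mathbb{C},M\in{\mathrm{SO}}(4)\}$; its coordinate ring is the quotient of the standard graded polynomial ring $\mathbb{C}[x_{ij}\mid1\le i,j\le4]$ by the homogeneous vanishing ideal, with the induced grading. The Hilbert series of a graded algebra $A=\bigoplus_dA_d$ is $\sum_d\dim_{\mathbb{C}}(A_d)t^d$. *)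

theory Defs
  imports "HOL-Analysis.Analysis" "HOL-Library.Function_Algebras"
    "HOL-Computational_Algebra.Formal_Power_Series" "HOL-Library.Numeral_Type"
begin

definition SO4 :: "(complex^4^4) set" where
  "SO4 = {M. transpose M ** M = mat 1 \<and> det M = 1}"

text \<open>The set of scalar multiples c M, M in SO(4); its Zariski closure is the cone.\<close>
definition cone_SO4_pts :: "(complex^4^4) set" where
  "cone_SO4_pts = {(\<chi> i j. c * M $ i $ j) | c M. M \<in> SO4}"

definition monomials_deg :: "nat \<Rightarrow> (4 \<times> 4 \<Rightarrow> nat) set" where
  "monomials_deg d = {\<alpha>. (\<Sum>p\<in>UNIV. \<alpha> p) = d}"

definition mono_fun_on :: "(complex^4^4) set \<Rightarrow> (4 \<times> 4 \<Rightarrow> nat) \<Rightarrow> (complex^4^4 \<Rightarrow> complex)" where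
  "mono_fun_on S \<alpha> = (\<lambda>M. if M \<in> S then (\<Prod>(i,j)\<in>UNIV. (M $ i $ j) ^ \<alpha> (i,j)) else 0)"

text \<open>Degree d part of the coordinate ring of the Zariski closure of S (S closed under
  scaling, so the vanishing ideal is homogeneous): homogeneous degree d polynomials modulo
  those vanishing on S (= vanishing on its Zariski closure). Its dimension is the dimension
  of the space of restrictions to S of the degree d monomials.\<close>
definition hilbert_fun :: "(complex^4^4) set \<Rightarrow> nat \<Rightarrow> nat" where
  "hilbert_fun S d = vector_space.dim (\<lambda>(c::complex) f x. c * f x)
      (mono_fun_on S ` monomials_deg d)"

definition hilbert_series :: "(complex^4^4) set \<Rightarrow> rat fps" where
  "hilbert_series S = Abs_fps (\<lambda>d. of_nat (hilbert_fun S d))"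

end

theory Submission
  imports Defs "HOL-Computational_Algebra.Polynomial"
begin

interpretation FS: vector_space "\<lambda>(c::complex) (f::'a \<Rightarrow> complex) x. c * f x"
  by unfold_locales (auto simp: fun_eq_iff algebra_simps)

definition restr :: "'a set \<Rightarrow> ('a \<Rightarrow> complex) \<Rightarrow> ('a \<Rightarrow> complex)" where
  "restr S f = (\<lambda>x. if x \<in> S then f x else 0)"

lemma FS_subspaceI:
  assumes "0 \<in> V" "\<And>x y. x \<in> V \<Longrightarrow> y \<in> V \<Longrightarrow> x + y \<in> V"
    "\<And>c x. x \<in> V \<Longrightarrow> (\<lambda>z. c * x z) \<in> V"
  shows "FS.subspace V"
  using assms unfolding FS.subspace_def by blast

lemma span_restr:
  assumes "f \<in> FS.span A" shows "restr S f \<in> FS.span (restr S ` A)"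
  using assms
proof (induction rule: FS.span_induct)
  case (step x)
  then show ?case by (auto intro!: FS.span_base)
next
  case base
  show ?case
  proof (rule FS_subspaceI)
    have "restr S 0 = 0" by (auto simp: restr_def fun_eq_iff)
    then show "0 \<in> {f. restr S f \<in> FS.span (restr S ` A)}" using FS.span_zero by simp
  next
    fix x y assume "x \<in> {f. restr S f \<in> FS.span (restr S ` A)}" "y \<in> {f. restr S f \<in> FS.span (restr S ` A)}"
    then have "restr S x + restr S y \<in> FS.span (restr S ` A)" by (simp add: FS.span_add)
    moreover have "restr S (x + y) = restr S x + restr S y" by (auto simp: restr_def fun_eq_iff)
    ultimately show "x + y \<in> {f. restr S f \<in> FS.span (restr S ` A)}" by simp
  next
    fix c x assume "x \<in> {f. restr S f \<in> FS.span (restr S ` A)}"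
    then have "(\<lambda>z. c * restr S x z) \<in> FS.span (restr S ` A)" by (simp add: FS.span_scale)
    moreover have "restr S (\<lambda>z. c * x z) = (\<lambda>z. c * restr S x z)" by (auto simp: restr_def fun_eq_iff)
    ultimately show "(\<lambda>z. c * x z) \<in> {f. restr S f \<in> FS.span (restr S ` A)}" by simp
  qed
qed

lemma span_mult_aux:
  assumes "g \<in> FS.span B" "\<And>b. b \<in> B \<Longrightarrow> (\<lambda>x. f x * b x) \<in> FS.span C"
  shows "(\<lambda>x. f x * g x) \<in> FS.span C"
  using assms(1)
proof (induction rule: FS.span_induct)
  case (step b) then show ?case using assms(2) by blast
next
  case base
  show ?case
  proof (rule FS_subspaceI)
    have "(\<lambda>x. f x * (0::'a\<Rightarrow>complex) x) = 0" by (simp add: fun_eq_iff)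
    then show "0 \<in> {g. (\<lambda>x. f x * g x) \<in> FS.span C}" using FS.span_zero by simp
  next
    fix y z assume "y \<in> {g. (\<lambda>x. f x * g x) \<in> FS.span C}" "z \<in> {g. (\<lambda>x. f x * g x) \<in> FS.span C}"
    then have "(\<lambda>x. f x * y x) + (\<lambda>x. f x * z x) \<in> FS.span C" by (simp add: FS.span_add)
    moreover have "(\<lambda>x. f x * (y + z) x) = (\<lambda>x. f x * y x) + (\<lambda>x. f x * z x)"
      by (simp add: fun_eq_iff distrib_left)
    ultimately show "y + z \<in> {g. (\<lambda>x. f x * g x) \<in> FS.span C}" by simp
  next
    fix c y assume "y \<in> {g. (\<lambda>x. f x * g x) \<in> FS.span C}"
    then have "(\<lambda>z. c * (f z * y z)) \<in> FS.span C" by (simp add: FS.span_scale)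
    moreover have "(\<lambda>x. f x * (c * y x)) = (\<lambda>z. c * (f z * y z))" by (simp add: fun_eq_iff ac_simps)
    ultimately show "(\<lambda>z. c * y z) \<in> {g. (\<lambda>x. f x * g x) \<in> FS.span C}" by simp
  qed
qed

lemma span_mult:
  assumes "f \<in> FS.span A" "g \<in> FS.span B"
    and "\<And>a b. a \<in> A \<Longrightarrow> b \<in> B \<Longrightarrow> (\<lambda>x. a x * b x) \<in> FS.span C"
  shows "(\<lambda>x. f x * g x) \<in> FS.span C"
proof (rule span_mult_aux[OF assms(2)])
  fix b assume b: "b \<in> B"
  have "(\<lambda>x. b x * f x) \<in> FS.span C"
    by (rule span_mult_aux[OF assms(1)]) (use assms(3) b in \<open>simp add: mult.commute\<close>)
  then show "(\<lambda>x. f x * b x) \<in> FS.span C" by (simp add: mult.commute)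
qed

definition mon :: "('i::finite \<Rightarrow> 'v \<Rightarrow> complex) \<Rightarrow> ('i \<Rightarrow> nat) \<Rightarrow> 'v \<Rightarrow> complex" where
  "mon x \<alpha> = (\<lambda>v. \<Prod>i\<in>UNIV. x i v ^ \<alpha> i)"

definition Mons :: "('i::finite \<Rightarrow> 'v \<Rightarrow> complex) \<Rightarrow> nat \<Rightarrow> ('v \<Rightarrow> complex) set" where
  "Mons x d = mon x ` {\<alpha>. sum \<alpha> UNIV = d}"

lemma mon_bump:
  fixes x :: "'i::finite \<Rightarrow> 'v \<Rightarrow> complex"
  shows "mon x (\<alpha>(i := Suc (\<alpha> i))) = (\<lambda>v. x i v * mon x \<alpha> v)"
proof -
  have "mon x (\<alpha>(i := Suc (\<alpha> i))) v = x i v * mon x \<alpha> v" for v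
  proof -
    have "mon x (\<alpha>(i := Suc (\<alpha> i))) v = x i v ^ Suc (\<alpha> i) * (\<Prod>j\<in>UNIV-{i}. x j v ^ \<alpha> j)"
      unfolding mon_def by (subst prod.remove[of _ i]) auto
    also have "\<dots> = x i v * (x i v ^ \<alpha> i * (\<Prod>j\<in>UNIV-{i}. x j v ^ \<alpha> j))" by simp
    also have "x i v ^ \<alpha> i * (\<Prod>j\<in>UNIV-{i}. x j v ^ \<alpha> j) = mon x \<alpha> v"
      unfolding mon_def by (subst prod.remove[of _ i]) auto
    finally show ?thesis .
  qed
  then show ?thesis by (simp add: fun_eq_iff)
qed

lemma sum_bump:
  fixes \<alpha> :: "'i::finite \<Rightarrow> nat"
  shows "sum (\<alpha>(i := Suc (\<alpha> i))) UNIV = Suc (sum \<alpha> UNIV)"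
proof -
  have "sum (\<alpha>(i := Suc (\<alpha> i))) UNIV = Suc (\<alpha> i) + sum \<alpha> (UNIV - {i})"
    by (subst sum.remove[of _ i]) auto
  also have "\<dots> = Suc (sum \<alpha> UNIV)"
    by (subst (2) sum.remove[of _ i]) auto
  finally show ?thesis .
qed

lemma mons_change:
  fixes x :: "'i::finite \<Rightarrow> 'v \<Rightarrow> complex" and y :: "'j::finite \<Rightarrow> 'v \<Rightarrow> complex"
  assumes xy: "\<And>i. x i \<in> FS.span (range y)"
  shows "sum \<alpha> UNIV = d \<Longrightarrow> mon x \<alpha> \<in> FS.span (Mons y d)"
proof (induction d arbitrary: \<alpha>)
  case 0
  then have "\<alpha> = (\<lambda>_. 0)" by (auto simp: fun_eq_iff)
  then have "mon x \<alpha> = mon y (\<lambda>_. 0)" by (simp add: mon_def)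
  then show ?case by (auto simp: Mons_def intro!: FS.span_base)
next
  case (Suc d)
  then obtain i where i: "\<alpha> i > 0"
    by (metis (mono_tags) nat.distinct(1) neq0_conv sum.neutral)
  define \<alpha>' where "\<alpha>' = \<alpha>(i := \<alpha> i - 1)"
  have a: "\<alpha> = \<alpha>'(i := Suc (\<alpha>' i))" using i by (auto simp: \<alpha>'_def fun_eq_iff)
  have "sum \<alpha>' UNIV = d" using Suc.prems unfolding a sum_bump by simp
  then have IH: "mon x \<alpha>' \<in> FS.span (Mons y d)" by (rule Suc.IH)
  have "(\<lambda>v. x i v * mon x \<alpha>' v) \<in> FS.span (Mons y (Suc d))"
  proof (rule span_mult[OF xy IH])
    fix a b assume "a \<in> range y" "b \<in> Mons y d"
    then obtain j \<beta> where ab: "a = y j" "b = mon y \<beta>" "sum \<beta> UNIV = d" by (auto simp: Mons_def)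
    have "(\<lambda>v. a v * b v) = mon y (\<beta>(j := Suc (\<beta> j)))" unfolding ab mon_bump ..
    moreover have "sum (\<beta>(j := Suc (\<beta> j))) UNIV = Suc d" using ab(3) sum_bump[of \<beta> j] by simp
    ultimately show "(\<lambda>v. a v * b v) \<in> FS.span (Mons y (Suc d))"
      by (auto simp: Mons_def intro!: FS.span_base)
  qed
  then show ?case by (subst a, subst mon_bump)
qed

lemma UNIV4: "(UNIV::4 set) = {0,1,2,3}"
  unfolding UNIV_4 by auto
lemma sum4: "sum f (UNIV::4 set) = f 0 + f 1 + f 2 + f 3"
  unfolding UNIV4 by (simp add: ac_simps)
lemma prod4: "prod f (UNIV::4 set) = f 0 * f 1 * f 2 * f 3"
  unfolding UNIV4 by (simp add: ac_simps)
lemma all4: "(\<forall>i::4. P i) \<longleftrightarrow> P 0 \<and> P 1 \<and> P 2 \<and> P 3"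
  by (metis UNIV4 UNIV_I insert_iff empty_iff)

definition ix :: "4 \<Rightarrow> nat" where
  "ix x = (if x = 0 then 0 else if x = 1 then 1 else if x = 2 then 2 else 3)"
lemma ix_simps[simp]: "ix 0 = 0" "ix 1 = 1" "ix 2 = 2" "ix 3 = 3"
  by (simp_all add: ix_def)

definition mk4 :: "complex list list \<Rightarrow> complex^4^4" where
  "mk4 L = (\<chi> i j. L ! ix i ! ix j)"

definition "Pm = mk4 [[1,\<i>,0,0],[0,0,1,\<i>],[0,0,-1,\<i>],[1,-\<i>,0,0]]"
definition "Pinv = mk4 [[1/2,0,0,1/2],[-\<i>/2,0,0,\<i>/2],[0,1/2,-1/2,0],[0,-\<i>/2,-\<i>/2,0]]"
definition "Jm = mk4 [[0,0,0,1/2],[0,0,-1/2,0],[0,-1/2,0,0],[1/2,0,0,0]]"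
definition "Jinv = mk4 [[0,0,0,2],[0,0,-2,0],[0,-2,0,0],[2,0,0,0]]"

lemma mat_eqI4: "(\<And>i j. i \<in> {0,1,2,3} \<Longrightarrow> j \<in> {0,1,2,3} \<Longrightarrow> A $ i $ j = B $ i $ j) \<Longrightarrow> A = (B::'a^4^4)"
  by (metis UNIV4 UNIV_I vec_eq_iff)

lemma mk4_nth[simp]: "mk4 L $ i $ j = L ! ix i ! ix j"
  by (simp add: mk4_def)

lemma mk4_mult: "(mk4 L ** mk4 K) $ i $ j = (\<Sum>k<4. L ! ix i ! k * K ! k ! ix j)"
  by (simp add: matrix_matrix_mult_def sum4 eval_nat_numeral)

lemma mat1_nth: "(mat 1 :: 'a::zero_neq_one^4^4) $ i $ j = (if ix i = ix j then 1 else 0)"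
proof -
  have "i \<in> {0,1,2,3}" "j \<in> {0,1,2,3}" using UNIV4 by auto
  then show ?thesis by (auto simp: mat_def ix_def)
qed

lemma P_Pinv: "Pm ** Pinv = mat 1"
  apply (rule mat_eqI4)
  apply (simp add: Pm_def Pinv_def mk4_mult mat1_nth eval_nat_numeral)
  apply (auto simp: field_simps)
  done

lemma Pinv_P: "Pinv ** Pm = mat 1"
  apply (rule mat_eqI4)
  apply (simp add: Pm_def Pinv_def mk4_mult mat1_nth eval_nat_numeral)
  apply (auto simp: field_simps)
  done

lemma transpose_mk4: "transpose (mk4 L) = mk4 (map (\<lambda>j. map (\<lambda>i. L ! i ! j) [0..<4]) [0..<4])"
proof -
  have "ix i < 4" for i by (simp add: ix_def)
  then show ?thesis
    by (auto simp: transpose_def mk4_def vec_eq_iff)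
qed

lemma tPinv_Pinv: "transpose Pinv ** Pinv = Jm"
  apply (rule mat_eqI4)
  apply (simp add: Pinv_def Jm_def transpose_mk4 mk4_mult eval_nat_numeral)
  apply (auto simp: field_simps)
  done

lemma J_Jinv: "Jm ** Jinv = mat 1"
  apply (rule mat_eqI4)
  apply (auto simp: Jm_def Jinv_def mk4_mult mat1_nth eval_nat_numeral)
  done

lemma Jinv_J: "Jinv ** Jm = mat 1"
  apply (rule mat_eqI4)
  apply (auto simp: Jm_def Jinv_def mk4_mult mat1_nth eval_nat_numeral)
  done

definition cofm :: "complex^4^4 \<Rightarrow> complex^4^4" where
  "cofm N = (\<chi> i j. [[(- N$1$3 * N$2$2 * N$3$1 + N$1$3 * N$2$1 * N$3$2 + N$1$2 * N$2$3 * N$3$1 - N$1$2 * N$2$1 * N$3$3 - N$1$1 * N$2$3 * N$3$2 + N$1$1 * N$2$2 * N$3$3), (N$1$3 * N$2$2 * N$3$0 - N$1$3 * N$2$0 * N$3$2 - N$1$2 * N$2$3 * N$3$0 + N$1$2 * N$2$0 * N$3$3 + N$1$0 * N$2$3 * N$3$2 - N$1$0 * N$2$2 * N$3$3), (- N$1$3 * N$2$1 * N$3$0 + N$1$3 * N$2$0 * N$3$1 + N$1$1 * N$2$3 * N$3$0 - N$1$1 * N$2$0 * N$3$3 - N$1$0 * N$2$3 * N$3$1 + N$1$0 * N$2$1 * N$3$3), (N$1$2 * N$2$1 * N$3$0 - N$1$2 * N$2$0 * N$3$1 - N$1$1 * N$2$2 * N$3$0 + N$1$1 * N$2$0 * N$3$2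 + N$1$0 * N$2$2 * N$3$1 - N$1$0 * N$2$1 * N$3$2)], [(N$0$3 * N$2$2 * N$3$1 - N$0$3 * N$2$1 * N$3$2 - N$0$2 * N$2$3 * N$3$1 + N$0$2 * N$2$1 * N$3$3 + N$0$1 * N$2$3 * N$3$2 - N$0$1 * N$2$2 * N$3$3), (- N$0$3 * N$2$2 * N$3$0 + N$0$3 * N$2$0 * N$3$2 + N$0$2 * N$2$3 * N$3$0 - N$0$2 * N$2$0 * N$3$3 - N$0$0 * N$2$3 * N$3$2 + N$0$0 * N$2$2 * N$3$3), (N$0$3 * N$2$1 * N$3$0 - N$0$3 * N$2$0 * N$3$1 - N$0$1 * N$2$3 * N$3$0 + N$0$1 * N$2$0 * N$3$3 + N$0$0 * N$2$3 * N$3$1 - N$0$0 * N$2$1 * N$3$3), (- N$0$2 * N$2$1 * N$3$0 + N$0$2 * N$2$0 * N$3$1 + N$0$1 * N$2$2 * N$3$0 - N$0$1 * N$2$0 * N$3$2 - N$0$0 * N$2$2 * N$3$1 + N$0$0 * N$2$1 * N$3$2)], [(- N$0$3 * N$1$2 * N$3$1 + N$0$3 * N$1$1 * N$3$2 + N$0$2 * N$1$3 * N$3$1 - N$0$2 * N$1$1 * N$3$3 - N$0$1 * N$1$3 * N$3$2 + N$0$1 * N$1$2 * N$3$3), (N$0$3 * N$1$2 * N$3$0 - N$0$3 * N$1$0 * N$3$2 - N$0$2 * N$1$3 * N$3$0 + N$0$2 * N$1$0 * N$3$3 + N$0$0 * N$1$3 * N$3$2 - N$0$0 * N$1$2 *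 N$3$3), (- N$0$3 * N$1$1 * N$3$0 + N$0$3 * N$1$0 * N$3$1 + N$0$1 * N$1$3 * N$3$0 - N$0$1 * N$1$0 * N$3$3 - N$0$0 * N$1$3 * N$3$1 + N$0$0 * N$1$1 * N$3$3), (N$0$2 * N$1$1 * N$3$0 - N$0$2 * N$1$0 * N$3$1 - N$0$1 * N$1$2 * N$3$0 + N$0$1 * N$1$0 * N$3$2 + N$0$0 * N$1$2 * N$3$1 - N$0$0 * N$1$1 * N$3$2)], [(N$0$3 * N$1$2 * N$2$1 - N$0$3 * N$1$1 * N$2$2 - N$0$2 * N$1$3 * N$2$1 + N$0$2 * N$1$1 * N$2$3 + N$0$1 * N$1$3 * N$2$2 - N$0$1 * N$1$2 * N$2$3), (- N$0$3 * N$1$2 * N$2$0 + N$0$3 * N$1$0 * N$2$2 + N$0$2 * N$1$3 * N$2$0 - N$0$2 * N$1$0 * N$2$3 - N$0$0 * N$1$3 * N$2$2 + N$0$0 * N$1$2 * N$2$3), (N$0$3 * N$1$1 * N$2$0 - N$0$3 * N$1$0 * N$2$1 - N$0$1 * N$1$3 * N$2$0 + N$0$1 * N$1$0 * N$2$3 + N$0$0 * N$1$3 * N$2$1 - N$0$0 * N$1$1 * N$2$3), (- N$0$2 * N$1$1 * N$2$0 + N$0$2 * N$1$0 * N$2$1 + N$0$1 * N$1$2 * N$2$0 - N$0$1 * N$1$0 * N$2$2 - N$0$0 * N$1$2 * N$2$1 + N$0$0 * N$1$1 * N$2$2)]] ! ix i ! ix j)"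

lemma det4: "det (N::complex^4^4) = (N$0$3 * N$1$2 * N$2$1 * N$3$0 - N$0$3 * N$1$2 * N$2$0 * N$3$1 - N$0$3 * N$1$1 * N$2$2 * N$3$0 + N$0$3 * N$1$1 * N$2$0 * N$3$2 + N$0$3 * N$1$0 * N$2$2 * N$3$1 - N$0$3 * N$1$0 * N$2$1 * N$3$2 - N$0$2 * N$1$3 * N$2$1 * N$3$0 + N$0$2 * N$1$3 * N$2$0 * N$3$1 + N$0$2 * N$1$1 * N$2$3 * N$3$0 - N$0$2 * N$1$1 * N$2$0 * N$3$3 - N$0$2 * N$1$0 * N$2$3 * N$3$1 + N$0$2 * N$1$0 * N$2$1 * N$3$3 + N$0$1 * N$1$3 * N$2$2 * N$3$0 - N$0$1 * N$1$3 * N$2$0 * N$3$2 - N$0$1 * N$1$2 * N$2$3 * N$3$0 + N$0$1 * N$1$2 * N$2$0 * N$3$3 + N$0$1 * N$1$0 * N$2$3 * N$3$2 - N$0$1 * N$1$0 * N$2$2 * N$3$3 - N$0$0 * N$1$3 * N$2$2 * N$3$1 + N$0$0 * N$1$3 * N$2$1 * N$3$2 + N$0$0 * N$1$2 * N$2$3 * N$3$1 - N$0$0 * N$1$2 * N$2$1 * N$3$3 - N$0$0 * N$1$1 * N$2$3 * N$3$2 + N$0$0 * N$1$1 * N$2$2 * N$3$3)"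
proof -
  have f1: "finite {1::4, 2, 3}" "0 \<notin> {1::4, 2, 3}" by auto
  have f2: "finite {2::4, 3}" "1 \<notin> {2::4, 3}" by auto
  have f3: "finite {3::4}" "2 \<notin> {3::4}" by auto
  show ?thesis
    unfolding det_def UNIV4
    unfolding sum_over_permutations_insert[OF f1]
    unfolding sum_over_permutations_insert[OF f2]
    unfolding sum_over_permutations_insert[OF f3]
    unfolding permutes_sing
    by (simp add: sign_swap_id permutation_swap_id sign_compose sign_id swap_id_eq permutation_compose)
qed

lemma adj_id: "transpose (cofm N) ** N = mat (det N)"
  apply (rule mat_eqI4)
  apply (auto simp: matrix_matrix_mult_def sum4 cofm_def transpose_def mat_def det4)
  apply (algebra)+
  done

lemma so4_facts:
  fixes M :: "complex^4^4"
  assumes o: "transpose M ** M = mat 1" and d: "det M = 1"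
  defines "N \<equiv> Pm ** M ** Pinv"
  shows "transpose N ** Jm ** N = Jm" "N ** Jinv ** transpose N = Jinv"
    "transpose (cofm N) = Jinv ** transpose N ** Jm" "det N = 1"
proof -
  have tP: "transpose Pm ** transpose Pinv = mat 1"
    by (metis Pinv_P matrix_transpose_mul transpose_mat)
  have "transpose N ** Jm ** N = transpose Pinv ** transpose M ** (transpose Pm ** transpose Pinv) ** Pinv ** Pm ** M ** Pinv"
    unfolding N_def tPinv_Pinv[symmetric] by (simp add: matrix_transpose_mul matrix_mul_assoc)
  also have "\<dots> = transpose Pinv ** (transpose M ** M) ** Pinv"
  proof -
    have e: "Pinv ** (Pm ** X) = X" for X :: "complex^4^4"
      by (simp add: matrix_mul_assoc Pinv_P)
    show ?thesis unfolding tP by (simp add: matrix_mul_assoc[symmetric] e)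
  qed
  finally show h1: "transpose N ** Jm ** N = Jm" by (simp add: o tPinv_Pinv)
  have "(Jinv ** transpose N ** Jm) ** N = Jinv ** (transpose N ** Jm ** N)"
    by (simp add: matrix_mul_assoc)
  then have "(Jinv ** transpose N ** Jm) ** N = mat 1"
    using h1 by (simp add: Jinv_J)
  then have inv: "N ** (Jinv ** transpose N ** Jm) = mat 1"
    using matrix_left_right_inverse by blast
  have "(N ** (Jinv ** transpose N ** Jm)) ** Jinv = (N ** Jinv ** transpose N) ** (Jm ** Jinv)"
    by (simp add: matrix_mul_assoc)
  then have "N ** Jinv ** transpose N = (N ** (Jinv ** transpose N ** Jm)) ** Jinv"
    by (simp add: J_Jinv)
  then show "N ** Jinv ** transpose N = Jinv" by (simp add: inv)
  have dN: "det N = 1"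
  proof -
    have "det N = det Pm * det M * det Pinv" by (simp add: N_def det_mul)
    also have "\<dots> = det (Pm ** Pinv)" by (simp add: det_mul d)
    finally show ?thesis by (simp add: P_Pinv)
  qed
  then show "det N = 1" .
  have "transpose (cofm N) = transpose (cofm N) ** (N ** (Jinv ** transpose N ** Jm))"
    by (simp add: inv)
  also have "\<dots> = (transpose (cofm N) ** N) ** (Jinv ** transpose N ** Jm)"
    by (simp add: matrix_mul_assoc)
  finally show "transpose (cofm N) = Jinv ** transpose N ** Jm"
    by (simp add: adj_id dN)
qed
lemma o1_gen: "(transpose N ** Jm ** N) $ x $ y = (N$0$x*N$3$y + N$3$x*N$0$y - N$1$x*N$2$y - N$2$x*N$1$y) / 2"
  by (simp add: matrix_matrix_mult_def sum4 transpose_def Jm_def field_simps)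

lemma o2_gen: "(N ** Jinv ** transpose N) $ x $ y / 2 = N$x$0*N$y$3 + N$x$3*N$y$0 - N$x$1*N$y$2 - N$x$2*N$y$1"
  by (simp add: matrix_matrix_mult_def sum4 transpose_def Jinv_def field_simps)

lemma core_N:
  fixes N :: "complex^4^4"
  assumes h1: "transpose N ** Jm ** N = Jm" and h2: "N ** Jinv ** transpose N = Jinv"
    and h3: "transpose (cofm N) = Jinv ** transpose N ** Jm" and h4: "det N = 1"
  shows "(N$0$0) * (N$0$3) = (N$0$1) * (N$0$2) \<and> (N$0$0) * (N$1$2) = (N$1$0) * (N$0$2) \<and> (N$0$0) * (N$1$3) = (N$1$1) * (N$0$2) \<and> (N$0$1) * (N$1$2) = (N$1$0) * (N$0$3) \<and> (N$0$1) * (N$1$3) = (N$1$1) * (N$0$3) \<and> (N$1$0) * (N$1$3) = (N$1$1) * (N$1$2) \<and> (N$0$0) * (N$2$1) = (N$0$1) * (N$2$0) \<and> (N$0$0) * (N$3$0) = (N$1$0) * (N$2$0) \<and> (N$0$0) * (N$3$1) = (N$1$1) * (N$2$0) \<and> (N$0$1) * (N$3$0) = (N$1$0) * (N$2$1) \<and> (N$0$1) * (N$3$1) = (N$1$1) * (N$2$1) \<and> (N$1$0) * (N$3$1) = (N$1$1) * (N$3$0) \<and> (N$0$0) * (N$2$3) = (N$0$1) * (N$2$2) \<and> (N$0$0) * (N$3$2) = (N$1$0) * (N$2$2) \<and> (N$0$0) * (N$3$3) = (N$1$1) * (N$2$2) \<and> (N$0$1) * (N$3$2) = (N$1$0) *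 (N$2$3) \<and> (N$0$1) * (N$3$3) = (N$1$1) * (N$2$3) \<and> (N$1$0) * (N$3$3) = (N$1$1) * (N$3$2) \<and> (N$0$2) * (N$2$1) = (N$0$3) * (N$2$0) \<and> (N$0$2) * (N$3$0) = (N$1$2) * (N$2$0) \<and> (N$0$2) * (N$3$1) = (N$1$3) * (N$2$0) \<and> (N$0$3) * (N$3$0) = (N$1$2) * (N$2$1) \<and> (N$0$3) * (N$3$1) = (N$1$3) * (N$2$1) \<and> (N$1$2) * (N$3$1) = (N$1$3) * (N$3$0) \<and> (N$0$2) * (N$2$3) = (N$0$3) * (N$2$2) \<and> (N$0$2) * (N$3$2) = (N$1$2) * (N$2$2) \<and> (N$0$2) * (N$3$3) = (N$1$3) * (N$2$2) \<and> (N$0$3) * (N$3$2) = (N$1$2) * (N$2$3) \<and> (N$0$3) * (N$3$3) = (N$1$3) * (N$2$3) \<and> (N$1$2) * (N$3$3) = (N$1$3) * (N$3$2) \<and> (N$2$0) * (N$2$3) = (N$2$1) * (N$2$2) \<and> (N$2$0) * (N$3$2) = (N$3$0) * (N$2$2) \<and> (N$2$0) * (N$3$3) = (N$3$1) * (N$2$2) \<and> (N$2$1) * (N$3$2) = (N$3$0) * (N$2$3) \<and> (N$2$1) * (N$3$3) = (N$3$1) * (N$2$3) \<and> (N$3$0) * (N$3$3) = (N$3$1) * (N$3$2)"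
proof -
  have jm_00: "Jm$0$0 = 0" by (simp add: Jm_def)
  have ji_00: "Jinv$0$0 = 0" by (simp add: Jinv_def)
  have jm_01: "Jm$0$1 = 0" by (simp add: Jm_def)
  have ji_01: "Jinv$0$1 = 0" by (simp add: Jinv_def)
  have jm_02: "Jm$0$2 = 0" by (simp add: Jm_def)
  have ji_02: "Jinv$0$2 = 0" by (simp add: Jinv_def)
  have jm_03: "Jm$0$3 = 1/2" by (simp add: Jm_def)
  have ji_03: "Jinv$0$3 = 2" by (simp add: Jinv_def)
  have jm_10: "Jm$1$0 = 0" by (simp add: Jm_def)
  have ji_10: "Jinv$1$0 = 0" by (simp add: Jinv_def)
  have jm_11: "Jm$1$1 = 0" by (simp add: Jm_def)
  have ji_11: "Jinv$1$1 = 0" by (simp add: Jinv_def)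
  have jm_12: "Jm$1$2 = - 1/2" by (simp add: Jm_def)
  have ji_12: "Jinv$1$2 = - 2" by (simp add: Jinv_def)
  have jm_13: "Jm$1$3 = 0" by (simp add: Jm_def)
  have ji_13: "Jinv$1$3 = 0" by (simp add: Jinv_def)
  have jm_20: "Jm$2$0 = 0" by (simp add: Jm_def)
  have ji_20: "Jinv$2$0 = 0" by (simp add: Jinv_def)
  have jm_21: "Jm$2$1 = - 1/2" by (simp add: Jm_def)
  have ji_21: "Jinv$2$1 = - 2" by (simp add: Jinv_def)
  have jm_22: "Jm$2$2 = 0" by (simp add: Jm_def)
  have ji_22: "Jinv$2$2 = 0" by (simp add: Jinv_def)
  have jm_23: "Jm$2$3 = 0" by (simp add: Jm_def)
  have ji_23: "Jinv$2$3 = 0" by (simp add: Jinv_def)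
  have jm_30: "Jm$3$0 = 1/2" by (simp add: Jm_def)
  have ji_30: "Jinv$3$0 = 2" by (simp add: Jinv_def)
  have jm_31: "Jm$3$1 = 0" by (simp add: Jm_def)
  have ji_31: "Jinv$3$1 = 0" by (simp add: Jinv_def)
  have jm_32: "Jm$3$2 = 0" by (simp add: Jm_def)
  have ji_32: "Jinv$3$2 = 0" by (simp add: Jinv_def)
  have jm_33: "Jm$3$3 = 0" by (simp add: Jm_def)
  have ji_33: "Jinv$3$3 = 0" by (simp add: Jinv_def)
  have "(transpose N ** Jm ** N) $ 0 $ 0 = Jm $ 0 $ 0" using h1 by simp
  then have o1_00: "(- 2 * N$1$0 * N$2$0 + 2 * N$0$0 * N$3$0) = 0" using o1_gen[of N 0 0] jm_00 by algebra
  have "(N ** Jinv ** transpose N) $ 0 $ 0 = Jinv $ 0 $ 0" using h2 by simp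
  then have o2_00: "(- 2 * N$0$1 * N$0$2 + 2 * N$0$0 * N$0$3) = 0" using o2_gen[of N 0 0] ji_00 by (simp add: field_simps)
  have "(transpose N ** Jm ** N) $ 0 $ 1 = Jm $ 0 $ 1" using h1 by simp
  then have o1_01: "(- N$1$1 * N$2$0 - N$1$0 * N$2$1 + N$0$1 * N$3$0 + N$0$0 * N$3$1) = 0" using o1_gen[of N 0 1] jm_01 by algebra
  have "(N ** Jinv ** transpose N) $ 0 $ 1 = Jinv $ 0 $ 1" using h2 by simp
  then have o2_01: "(N$0$3 * N$1$0 - N$0$2 * N$1$1 - N$0$1 * N$1$2 + N$0$0 * N$1$3) = 0" using o2_gen[of N 0 1] ji_01 by (simp add: field_simps)
  have "(transpose N ** Jm ** N) $ 0 $ 2 = Jm $ 0 $ 2" using h1 by simp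
  then have o1_02: "(- N$1$2 * N$2$0 - N$1$0 * N$2$2 + N$0$2 * N$3$0 + N$0$0 * N$3$2) = 0" using o1_gen[of N 0 2] jm_02 by algebra
  have "(N ** Jinv ** transpose N) $ 0 $ 2 = Jinv $ 0 $ 2" using h2 by simp
  then have o2_02: "(N$0$3 * N$2$0 - N$0$2 * N$2$1 - N$0$1 * N$2$2 + N$0$0 * N$2$3) = 0" using o2_gen[of N 0 2] ji_02 by (simp add: field_simps)
  have "(transpose N ** Jm ** N) $ 0 $ 3 = Jm $ 0 $ 3" using h1 by simp
  then have o1_03: "(- N$1$3 * N$2$0 - N$1$0 * N$2$3 + N$0$3 * N$3$0 + N$0$0 * N$3$3) = 1" using o1_gen[of N 0 3] jm_03 by algebra
  have "(N ** Jinv ** transpose N) $ 0 $ 3 = Jinv $ 0 $ 3" using h2 by simp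
  then have o2_03: "(N$0$3 * N$3$0 - N$0$2 * N$3$1 - N$0$1 * N$3$2 + N$0$0 * N$3$3) = 1" using o2_gen[of N 0 3] ji_03 by (simp add: field_simps)
  have "(transpose N ** Jm ** N) $ 1 $ 0 = Jm $ 1 $ 0" using h1 by simp
  then have o1_10: "(- N$1$1 * N$2$0 - N$1$0 * N$2$1 + N$0$1 * N$3$0 + N$0$0 * N$3$1) = 0" using o1_gen[of N 1 0] jm_10 by algebra
  have "(N ** Jinv ** transpose N) $ 1 $ 0 = Jinv $ 1 $ 0" using h2 by simp
  then have o2_10: "(N$0$3 * N$1$0 - N$0$2 * N$1$1 - N$0$1 * N$1$2 + N$0$0 * N$1$3) = 0" using o2_gen[of N 1 0] ji_10 by (simp add: field_simps)
  have "(transpose N ** Jm ** N) $ 1 $ 1 = Jm $ 1 $ 1" using h1 by simp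
  then have o1_11: "(- 2 * N$1$1 * N$2$1 + 2 * N$0$1 * N$3$1) = 0" using o1_gen[of N 1 1] jm_11 by algebra
  have "(N ** Jinv ** transpose N) $ 1 $ 1 = Jinv $ 1 $ 1" using h2 by simp
  then have o2_11: "(- 2 * N$1$1 * N$1$2 + 2 * N$1$0 * N$1$3) = 0" using o2_gen[of N 1 1] ji_11 by (simp add: field_simps)
  have "(transpose N ** Jm ** N) $ 1 $ 2 = Jm $ 1 $ 2" using h1 by simp
  then have o1_12: "(- N$1$2 * N$2$1 - N$1$1 * N$2$2 + N$0$2 * N$3$1 + N$0$1 * N$3$2) = - 1" using o1_gen[of N 1 2] jm_12 by algebra
  have "(N ** Jinv ** transpose N) $ 1 $ 2 = Jinv $ 1 $ 2" using h2 by simp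
  then have o2_12: "(N$1$3 * N$2$0 - N$1$2 * N$2$1 - N$1$1 * N$2$2 + N$1$0 * N$2$3) = - 1" using o2_gen[of N 1 2] ji_12 by (simp add: field_simps)
  have "(transpose N ** Jm ** N) $ 1 $ 3 = Jm $ 1 $ 3" using h1 by simp
  then have o1_13: "(- N$1$3 * N$2$1 - N$1$1 * N$2$3 + N$0$3 * N$3$1 + N$0$1 * N$3$3) = 0" using o1_gen[of N 1 3] jm_13 by algebra
  have "(N ** Jinv ** transpose N) $ 1 $ 3 = Jinv $ 1 $ 3" using h2 by simp
  then have o2_13: "(N$1$3 * N$3$0 - N$1$2 * N$3$1 - N$1$1 * N$3$2 + N$1$0 * N$3$3) = 0" using o2_gen[of N 1 3] ji_13 by (simp add: field_simps)
  have "(transpose N ** Jm ** N) $ 2 $ 0 = Jm $ 2 $ 0" using h1 by simp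
  then have o1_20: "(- N$1$2 * N$2$0 - N$1$0 * N$2$2 + N$0$2 * N$3$0 + N$0$0 * N$3$2) = 0" using o1_gen[of N 2 0] jm_20 by algebra
  have "(N ** Jinv ** transpose N) $ 2 $ 0 = Jinv $ 2 $ 0" using h2 by simp
  then have o2_20: "(N$0$3 * N$2$0 - N$0$2 * N$2$1 - N$0$1 * N$2$2 + N$0$0 * N$2$3) = 0" using o2_gen[of N 2 0] ji_20 by (simp add: field_simps)
  have "(transpose N ** Jm ** N) $ 2 $ 1 = Jm $ 2 $ 1" using h1 by simp
  then have o1_21: "(- N$1$2 * N$2$1 - N$1$1 * N$2$2 + N$0$2 * N$3$1 + N$0$1 * N$3$2) = - 1" using o1_gen[of N 2 1] jm_21 by algebra
  have "(N ** Jinv ** transpose N) $ 2 $ 1 = Jinv $ 2 $ 1" using h2 by simp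
  then have o2_21: "(N$1$3 * N$2$0 - N$1$2 * N$2$1 - N$1$1 * N$2$2 + N$1$0 * N$2$3) = - 1" using o2_gen[of N 2 1] ji_21 by (simp add: field_simps)
  have "(transpose N ** Jm ** N) $ 2 $ 2 = Jm $ 2 $ 2" using h1 by simp
  then have o1_22: "(- 2 * N$1$2 * N$2$2 + 2 * N$0$2 * N$3$2) = 0" using o1_gen[of N 2 2] jm_22 by algebra
  have "(N ** Jinv ** transpose N) $ 2 $ 2 = Jinv $ 2 $ 2" using h2 by simp
  then have o2_22: "(- 2 * N$2$1 * N$2$2 + 2 * N$2$0 * N$2$3) = 0" using o2_gen[of N 2 2] ji_22 by (simp add: field_simps)
  have "(transpose N ** Jm ** N) $ 2 $ 3 = Jm $ 2 $ 3" using h1 by simp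
  then have o1_23: "(- N$1$3 * N$2$2 - N$1$2 * N$2$3 + N$0$3 * N$3$2 + N$0$2 * N$3$3) = 0" using o1_gen[of N 2 3] jm_23 by algebra
  have "(N ** Jinv ** transpose N) $ 2 $ 3 = Jinv $ 2 $ 3" using h2 by simp
  then have o2_23: "(N$2$3 * N$3$0 - N$2$2 * N$3$1 - N$2$1 * N$3$2 + N$2$0 * N$3$3) = 0" using o2_gen[of N 2 3] ji_23 by (simp add: field_simps)
  have "(transpose N ** Jm ** N) $ 3 $ 0 = Jm $ 3 $ 0" using h1 by simp
  then have o1_30: "(- N$1$3 * N$2$0 - N$1$0 * N$2$3 + N$0$3 * N$3$0 + N$0$0 * N$3$3) = 1" using o1_gen[of N 3 0] jm_30 by algebra
  have "(N ** Jinv ** transpose N) $ 3 $ 0 = Jinv $ 3 $ 0" using h2 by simp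
  then have o2_30: "(N$0$3 * N$3$0 - N$0$2 * N$3$1 - N$0$1 * N$3$2 + N$0$0 * N$3$3) = 1" using o2_gen[of N 3 0] ji_30 by (simp add: field_simps)
  have "(transpose N ** Jm ** N) $ 3 $ 1 = Jm $ 3 $ 1" using h1 by simp
  then have o1_31: "(- N$1$3 * N$2$1 - N$1$1 * N$2$3 + N$0$3 * N$3$1 + N$0$1 * N$3$3) = 0" using o1_gen[of N 3 1] jm_31 by algebra
  have "(N ** Jinv ** transpose N) $ 3 $ 1 = Jinv $ 3 $ 1" using h2 by simp
  then have o2_31: "(N$1$3 * N$3$0 - N$1$2 * N$3$1 - N$1$1 * N$3$2 + N$1$0 * N$3$3) = 0" using o2_gen[of N 3 1] ji_31 by (simp add: field_simps)
  have "(transpose N ** Jm ** N) $ 3 $ 2 = Jm $ 3 $ 2" using h1 by simp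
  then have o1_32: "(- N$1$3 * N$2$2 - N$1$2 * N$2$3 + N$0$3 * N$3$2 + N$0$2 * N$3$3) = 0" using o1_gen[of N 3 2] jm_32 by algebra
  have "(N ** Jinv ** transpose N) $ 3 $ 2 = Jinv $ 3 $ 2" using h2 by simp
  then have o2_32: "(N$2$3 * N$3$0 - N$2$2 * N$3$1 - N$2$1 * N$3$2 + N$2$0 * N$3$3) = 0" using o2_gen[of N 3 2] ji_32 by (simp add: field_simps)
  have "(transpose N ** Jm ** N) $ 3 $ 3 = Jm $ 3 $ 3" using h1 by simp
  then have o1_33: "(- 2 * N$1$3 * N$2$3 + 2 * N$0$3 * N$3$3) = 0" using o1_gen[of N 3 3] jm_33 by algebra
  have "(N ** Jinv ** transpose N) $ 3 $ 3 = Jinv $ 3 $ 3" using h2 by simp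
  then have o2_33: "(- 2 * N$3$1 * N$3$2 + 2 * N$3$0 * N$3$3) = 0" using o2_gen[of N 3 3] ji_33 by (simp add: field_simps)
  have x_00: "(Jinv ** transpose N ** Jm) $ 0 $ 0 = (N$3$3)" by (simp add: matrix_matrix_mult_def sum4 transpose_def Jinv_def Jm_def)
  have "transpose (cofm N) $ 0 $ 0 = (Jinv ** transpose N ** Jm) $ 0 $ 0" using h3 by simp
  then have adj_00: "(- N$1$3 * N$2$2 * N$3$1 + N$1$3 * N$2$1 * N$3$2 + N$1$2 * N$2$3 * N$3$1 - N$1$2 * N$2$1 * N$3$3 - N$1$1 * N$2$3 * N$3$2 + N$1$1 * N$2$2 * N$3$3) = (N$3$3)" using x_00 by (simp add: cofm_def transpose_def)
  have x_01: "(Jinv ** transpose N ** Jm) $ 0 $ 1 = (- N$2$3)" by (simp add: matrix_matrix_mult_def sum4 transpose_def Jinv_def Jm_def)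
  have "transpose (cofm N) $ 0 $ 1 = (Jinv ** transpose N ** Jm) $ 0 $ 1" using h3 by simp
  then have adj_10: "(N$0$3 * N$2$2 * N$3$1 - N$0$3 * N$2$1 * N$3$2 - N$0$2 * N$2$3 * N$3$1 + N$0$2 * N$2$1 * N$3$3 + N$0$1 * N$2$3 * N$3$2 - N$0$1 * N$2$2 * N$3$3) = (- N$2$3)" using x_01 by (simp add: cofm_def transpose_def)
  have x_02: "(Jinv ** transpose N ** Jm) $ 0 $ 2 = (- N$1$3)" by (simp add: matrix_matrix_mult_def sum4 transpose_def Jinv_def Jm_def)
  have "transpose (cofm N) $ 0 $ 2 = (Jinv ** transpose N ** Jm) $ 0 $ 2" using h3 by simp
  then have adj_20: "(- N$0$3 * N$1$2 * N$3$1 + N$0$3 * N$1$1 * N$3$2 + N$0$2 * N$1$3 * N$3$1 - N$0$2 * N$1$1 * N$3$3 - N$0$1 * N$1$3 * N$3$2 + N$0$1 * N$1$2 * N$3$3) = (- N$1$3)" using x_02 by (simp add: cofm_def transpose_def)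
  have x_03: "(Jinv ** transpose N ** Jm) $ 0 $ 3 = (N$0$3)" by (simp add: matrix_matrix_mult_def sum4 transpose_def Jinv_def Jm_def)
  have "transpose (cofm N) $ 0 $ 3 = (Jinv ** transpose N ** Jm) $ 0 $ 3" using h3 by simp
  then have adj_30: "(N$0$3 * N$1$2 * N$2$1 - N$0$3 * N$1$1 * N$2$2 - N$0$2 * N$1$3 * N$2$1 + N$0$2 * N$1$1 * N$2$3 + N$0$1 * N$1$3 * N$2$2 - N$0$1 * N$1$2 * N$2$3) = (N$0$3)" using x_03 by (simp add: cofm_def transpose_def)
  have x_10: "(Jinv ** transpose N ** Jm) $ 1 $ 0 = (- N$3$2)" by (simp add: matrix_matrix_mult_def sum4 transpose_def Jinv_def Jm_def)
  have "transpose (cofm N) $ 1 $ 0 = (Jinv ** transpose N ** Jm) $ 1 $ 0" using h3 by simp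
  then have adj_01: "(N$1$3 * N$2$2 * N$3$0 - N$1$3 * N$2$0 * N$3$2 - N$1$2 * N$2$3 * N$3$0 + N$1$2 * N$2$0 * N$3$3 + N$1$0 * N$2$3 * N$3$2 - N$1$0 * N$2$2 * N$3$3) = (- N$3$2)" using x_10 by (simp add: cofm_def transpose_def)
  have x_11: "(Jinv ** transpose N ** Jm) $ 1 $ 1 = (N$2$2)" by (simp add: matrix_matrix_mult_def sum4 transpose_def Jinv_def Jm_def)
  have "transpose (cofm N) $ 1 $ 1 = (Jinv ** transpose N ** Jm) $ 1 $ 1" using h3 by simp
  then have adj_11: "(- N$0$3 * N$2$2 * N$3$0 + N$0$3 * N$2$0 * N$3$2 + N$0$2 * N$2$3 * N$3$0 - N$0$2 * N$2$0 * N$3$3 - N$0$0 * N$2$3 * N$3$2 + N$0$0 * N$2$2 * N$3$3) = (N$2$2)" using x_11 by (simp add: cofm_def transpose_def)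
  have x_12: "(Jinv ** transpose N ** Jm) $ 1 $ 2 = (N$1$2)" by (simp add: matrix_matrix_mult_def sum4 transpose_def Jinv_def Jm_def)
  have "transpose (cofm N) $ 1 $ 2 = (Jinv ** transpose N ** Jm) $ 1 $ 2" using h3 by simp
  then have adj_21: "(N$0$3 * N$1$2 * N$3$0 - N$0$3 * N$1$0 * N$3$2 - N$0$2 * N$1$3 * N$3$0 + N$0$2 * N$1$0 * N$3$3 + N$0$0 * N$1$3 * N$3$2 - N$0$0 * N$1$2 * N$3$3) = (N$1$2)" using x_12 by (simp add: cofm_def transpose_def)
  have x_13: "(Jinv ** transpose N ** Jm) $ 1 $ 3 = (- N$0$2)" by (simp add: matrix_matrix_mult_def sum4 transpose_def Jinv_def Jm_def)
  have "transpose (cofm N) $ 1 $ 3 = (Jinv ** transpose N ** Jm) $ 1 $ 3" using h3 by simp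
  then have adj_31: "(- N$0$3 * N$1$2 * N$2$0 + N$0$3 * N$1$0 * N$2$2 + N$0$2 * N$1$3 * N$2$0 - N$0$2 * N$1$0 * N$2$3 - N$0$0 * N$1$3 * N$2$2 + N$0$0 * N$1$2 * N$2$3) = (- N$0$2)" using x_13 by (simp add: cofm_def transpose_def)
  have x_20: "(Jinv ** transpose N ** Jm) $ 2 $ 0 = (- N$3$1)" by (simp add: matrix_matrix_mult_def sum4 transpose_def Jinv_def Jm_def)
  have "transpose (cofm N) $ 2 $ 0 = (Jinv ** transpose N ** Jm) $ 2 $ 0" using h3 by simp
  then have adj_02: "(- N$1$3 * N$2$1 * N$3$0 + N$1$3 * N$2$0 * N$3$1 + N$1$1 * N$2$3 * N$3$0 - N$1$1 * N$2$0 * N$3$3 - N$1$0 * N$2$3 * N$3$1 + N$1$0 * N$2$1 * N$3$3) = (- N$3$1)" using x_20 by (simp add: cofm_def transpose_def)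
  have x_21: "(Jinv ** transpose N ** Jm) $ 2 $ 1 = (N$2$1)" by (simp add: matrix_matrix_mult_def sum4 transpose_def Jinv_def Jm_def)
  have "transpose (cofm N) $ 2 $ 1 = (Jinv ** transpose N ** Jm) $ 2 $ 1" using h3 by simp
  then have adj_12: "(N$0$3 * N$2$1 * N$3$0 - N$0$3 * N$2$0 * N$3$1 - N$0$1 * N$2$3 * N$3$0 + N$0$1 * N$2$0 * N$3$3 + N$0$0 * N$2$3 * N$3$1 - N$0$0 * N$2$1 * N$3$3) = (N$2$1)" using x_21 by (simp add: cofm_def transpose_def)
  have x_22: "(Jinv ** transpose N ** Jm) $ 2 $ 2 = (N$1$1)" by (simp add: matrix_matrix_mult_def sum4 transpose_def Jinv_def Jm_def)
  have "transpose (cofm N) $ 2 $ 2 = (Jinv ** transpose N ** Jm) $ 2 $ 2" using h3 by simp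
  then have adj_22: "(- N$0$3 * N$1$1 * N$3$0 + N$0$3 * N$1$0 * N$3$1 + N$0$1 * N$1$3 * N$3$0 - N$0$1 * N$1$0 * N$3$3 - N$0$0 * N$1$3 * N$3$1 + N$0$0 * N$1$1 * N$3$3) = (N$1$1)" using x_22 by (simp add: cofm_def transpose_def)
  have x_23: "(Jinv ** transpose N ** Jm) $ 2 $ 3 = (- N$0$1)" by (simp add: matrix_matrix_mult_def sum4 transpose_def Jinv_def Jm_def)
  have "transpose (cofm N) $ 2 $ 3 = (Jinv ** transpose N ** Jm) $ 2 $ 3" using h3 by simp
  then have adj_32: "(N$0$3 * N$1$1 * N$2$0 - N$0$3 * N$1$0 * N$2$1 - N$0$1 * N$1$3 * N$2$0 + N$0$1 * N$1$0 * N$2$3 + N$0$0 * N$1$3 * N$2$1 - N$0$0 * N$1$1 * N$2$3) = (- N$0$1)" using x_23 by (simp add: cofm_def transpose_def)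
  have x_30: "(Jinv ** transpose N ** Jm) $ 3 $ 0 = (N$3$0)" by (simp add: matrix_matrix_mult_def sum4 transpose_def Jinv_def Jm_def)
  have "transpose (cofm N) $ 3 $ 0 = (Jinv ** transpose N ** Jm) $ 3 $ 0" using h3 by simp
  then have adj_03: "(N$1$2 * N$2$1 * N$3$0 - N$1$2 * N$2$0 * N$3$1 - N$1$1 * N$2$2 * N$3$0 + N$1$1 * N$2$0 * N$3$2 + N$1$0 * N$2$2 * N$3$1 - N$1$0 * N$2$1 * N$3$2) = (N$3$0)" using x_30 by (simp add: cofm_def transpose_def)
  have x_31: "(Jinv ** transpose N ** Jm) $ 3 $ 1 = (- N$2$0)" by (simp add: matrix_matrix_mult_def sum4 transpose_def Jinv_def Jm_def)
  have "transpose (cofm N) $ 3 $ 1 = (Jinv ** transpose N ** Jm) $ 3 $ 1" using h3 by simp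
  then have adj_13: "(- N$0$2 * N$2$1 * N$3$0 + N$0$2 * N$2$0 * N$3$1 + N$0$1 * N$2$2 * N$3$0 - N$0$1 * N$2$0 * N$3$2 - N$0$0 * N$2$2 * N$3$1 + N$0$0 * N$2$1 * N$3$2) = (- N$2$0)" using x_31 by (simp add: cofm_def transpose_def)
  have x_32: "(Jinv ** transpose N ** Jm) $ 3 $ 2 = (- N$1$0)" by (simp add: matrix_matrix_mult_def sum4 transpose_def Jinv_def Jm_def)
  have "transpose (cofm N) $ 3 $ 2 = (Jinv ** transpose N ** Jm) $ 3 $ 2" using h3 by simp
  then have adj_23: "(N$0$2 * N$1$1 * N$3$0 - N$0$2 * N$1$0 * N$3$1 - N$0$1 * N$1$2 * N$3$0 + N$0$1 * N$1$0 * N$3$2 + N$0$0 * N$1$2 * N$3$1 - N$0$0 * N$1$1 * N$3$2) = (- N$1$0)" using x_32 by (simp add: cofm_def transpose_def)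
  have x_33: "(Jinv ** transpose N ** Jm) $ 3 $ 3 = (N$0$0)" by (simp add: matrix_matrix_mult_def sum4 transpose_def Jinv_def Jm_def)
  have "transpose (cofm N) $ 3 $ 3 = (Jinv ** transpose N ** Jm) $ 3 $ 3" using h3 by simp
  then have adj_33: "(- N$0$2 * N$1$1 * N$2$0 + N$0$2 * N$1$0 * N$2$1 + N$0$1 * N$1$2 * N$2$0 - N$0$1 * N$1$0 * N$2$2 - N$0$0 * N$1$2 * N$2$1 + N$0$0 * N$1$1 * N$2$2) = (N$0$0)" using x_33 by (simp add: cofm_def transpose_def)
  have det: "(N$0$3 * N$1$2 * N$2$1 * N$3$0 - N$0$3 * N$1$2 * N$2$0 * N$3$1 - N$0$3 * N$1$1 * N$2$2 * N$3$0 + N$0$3 * N$1$1 * N$2$0 * N$3$2 + N$0$3 * N$1$0 * N$2$2 * N$3$1 - N$0$3 * N$1$0 * N$2$1 * N$3$2 - N$0$2 * N$1$3 * N$2$1 * N$3$0 + N$0$2 * N$1$3 * N$2$0 * N$3$1 + N$0$2 * N$1$1 * N$2$3 * N$3$0 - N$0$2 * N$1$1 * N$2$0 * N$3$3 - N$0$2 * N$1$0 * N$2$3 * N$3$1 + N$0$2 * N$1$0 * N$2$1 * N$3$3 + N$0$1 * N$1$3 * N$2$2 * N$3$0 - N$0$1 * N$1$3 * N$2$0 * N$3$2 - N$0$1 * N$1$2 * N$2$3 * N$3$0 + N$0$1 * N$1$2 * N$2$0 * N$3$3 + N$0$1 * N$1$0 * N$2$3 * N$3$2 - N$0$1 * N$1$0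 * N$2$2 * N$3$3 - N$0$0 * N$1$3 * N$2$2 * N$3$1 + N$0$0 * N$1$3 * N$2$1 * N$3$2 + N$0$0 * N$1$2 * N$2$3 * N$3$1 - N$0$0 * N$1$2 * N$2$1 * N$3$3 - N$0$0 * N$1$1 * N$2$3 * N$3$2 + N$0$0 * N$1$1 * N$2$2 * N$3$3) = 1" using h4 by (simp add: det4)
  have j_01_02: "(- N$1$3 * N$2$2 * N$3$1 + N$1$3 * N$2$1 * N$3$2 + N$1$2 * N$2$3 * N$3$1 - N$1$2 * N$2$1 * N$3$3 - N$1$1 * N$2$3 * N$3$2 + N$1$1 * N$2$2 * N$3$3) * (N$0$3 * N$1$2 * N$3$0 - N$0$3 * N$1$0 * N$3$2 - N$0$2 * N$1$3 * N$3$0 + N$0$2 * N$1$0 * N$3$3 + N$0$0 * N$1$3 * N$3$2 - N$0$0 * N$1$2 * N$3$3) - (- N$0$3 * N$1$2 * N$3$1 + N$0$3 * N$1$1 * N$3$2 + N$0$2 * N$1$3 * N$3$1 - N$0$2 * N$1$1 * N$3$3 - N$0$1 * N$1$3 * N$3$2 + N$0$1 * N$1$2 * N$3$3) * (N$1$3 * N$2$2 * N$3$0 - N$1$3 * N$2$0 * N$3$2 - N$1$2 * N$2$3 * N$3$0 + N$1$2 * N$2$0 * N$3$3 + N$1$0 * N$2$3 * N$3$2 - N$1$0 * N$2$2 * N$3$3) = - (N$0$3 * N$1$2 * N$2$1 * N$3$0 - N$0$3 * N$1$2 * N$2$0 * N$3$1 - N$0$3 * N$1$1 * N$2$2 * N$3$0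 + N$0$3 * N$1$1 * N$2$0 * N$3$2 + N$0$3 * N$1$0 * N$2$2 * N$3$1 - N$0$3 * N$1$0 * N$2$1 * N$3$2 - N$0$2 * N$1$3 * N$2$1 * N$3$0 + N$0$2 * N$1$3 * N$2$0 * N$3$1 + N$0$2 * N$1$1 * N$2$3 * N$3$0 - N$0$2 * N$1$1 * N$2$0 * N$3$3 - N$0$2 * N$1$0 * N$2$3 * N$3$1 + N$0$2 * N$1$0 * N$2$1 * N$3$3 + N$0$1 * N$1$3 * N$2$2 * N$3$0 - N$0$1 * N$1$3 * N$2$0 * N$3$2 - N$0$1 * N$1$2 * N$2$3 * N$3$0 + N$0$1 * N$1$2 * N$2$0 * N$3$3 + N$0$1 * N$1$0 * N$2$3 * N$3$2 - N$0$1 * N$1$0 * N$2$2 * N$3$3 - N$0$0 * N$1$3 * N$2$2 * N$3$1 + N$0$0 * N$1$3 * N$2$1 * N$3$2 + N$0$0 * N$1$2 * N$2$3 * N$3$1 - N$0$0 * N$1$2 * N$2$1 * N$3$3 - N$0$0 * N$1$1 * N$2$3 * N$3$2 + N$0$0 * N$1$1 * N$2$2 * N$3$3) * (- N$1$3 * N$3$2 + N$1$2 * N$3$3)" by algebra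
  note j_01_02 = j_01_02[unfolded adj_00 adj_21 adj_20 adj_01 det]
  have j_01_03: "(- N$1$3 * N$2$2 * N$3$1 + N$1$3 * N$2$1 * N$3$2 + N$1$2 * N$2$3 * N$3$1 - N$1$2 * N$2$1 * N$3$3 - N$1$1 * N$2$3 * N$3$2 + N$1$1 * N$2$2 * N$3$3) * (- N$0$3 * N$1$2 * N$2$0 + N$0$3 * N$1$0 * N$2$2 + N$0$2 * N$1$3 * N$2$0 - N$0$2 * N$1$0 * N$2$3 - N$0$0 * N$1$3 * N$2$2 + N$0$0 * N$1$2 * N$2$3) - (N$0$3 * N$1$2 * N$2$1 - N$0$3 * N$1$1 * N$2$2 - N$0$2 * N$1$3 * N$2$1 + N$0$2 * N$1$1 * N$2$3 + N$0$1 * N$1$3 * N$2$2 - N$0$1 * N$1$2 * N$2$3) * (N$1$3 * N$2$2 * N$3$0 - N$1$3 * N$2$0 * N$3$2 - N$1$2 * N$2$3 * N$3$0 + N$1$2 * N$2$0 * N$3$3 + N$1$0 * N$2$3 * N$3$2 - N$1$0 * N$2$2 * N$3$3) = (N$0$3 * N$1$2 * N$2$1 * N$3$0 - N$0$3 * N$1$2 * N$2$0 * N$3$1 - N$0$3 * N$1$1 * N$2$2 * N$3$0 + N$0$3 * N$1$1 * N$2$0 * N$3$2 + N$0$3 * N$1$0 * N$2$2 * N$3$1 - N$0$3 * N$1$0 * N$2$1 * N$3$2 - N$0$2 * N$1$3 * N$2$1 * N$3$0 + N$0$2 * N$1$3 * N$2$0 * N$3$1 + N$0$2 * N$1$1 *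 N$2$3 * N$3$0 - N$0$2 * N$1$1 * N$2$0 * N$3$3 - N$0$2 * N$1$0 * N$2$3 * N$3$1 + N$0$2 * N$1$0 * N$2$1 * N$3$3 + N$0$1 * N$1$3 * N$2$2 * N$3$0 - N$0$1 * N$1$3 * N$2$0 * N$3$2 - N$0$1 * N$1$2 * N$2$3 * N$3$0 + N$0$1 * N$1$2 * N$2$0 * N$3$3 + N$0$1 * N$1$0 * N$2$3 * N$3$2 - N$0$1 * N$1$0 * N$2$2 * N$3$3 - N$0$0 * N$1$3 * N$2$2 * N$3$1 + N$0$0 * N$1$3 * N$2$1 * N$3$2 + N$0$0 * N$1$2 * N$2$3 * N$3$1 - N$0$0 * N$1$2 * N$2$1 * N$3$3 - N$0$0 * N$1$1 * N$2$3 * N$3$2 + N$0$0 * N$1$1 * N$2$2 * N$3$3) * (- N$1$3 * N$2$2 + N$1$2 * N$2$3)" by algebra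
  note j_01_03 = j_01_03[unfolded adj_00 adj_31 adj_30 adj_01 det]
  have j_01_13: "(N$0$3 * N$2$2 * N$3$1 - N$0$3 * N$2$1 * N$3$2 - N$0$2 * N$2$3 * N$3$1 + N$0$2 * N$2$1 * N$3$3 + N$0$1 * N$2$3 * N$3$2 - N$0$1 * N$2$2 * N$3$3) * (- N$0$3 * N$1$2 * N$2$0 + N$0$3 * N$1$0 * N$2$2 + N$0$2 * N$1$3 * N$2$0 - N$0$2 * N$1$0 * N$2$3 - N$0$0 * N$1$3 * N$2$2 + N$0$0 * N$1$2 * N$2$3) - (N$0$3 * N$1$2 * N$2$1 - N$0$3 * N$1$1 * N$2$2 - N$0$2 * N$1$3 * N$2$1 + N$0$2 * N$1$1 * N$2$3 + N$0$1 * N$1$3 * N$2$2 - N$0$1 * N$1$2 * N$2$3) * (- N$0$3 * N$2$2 * N$3$0 + N$0$3 * N$2$0 * N$3$2 + N$0$2 * N$2$3 * N$3$0 - N$0$2 * N$2$0 * N$3$3 - N$0$0 * N$2$3 * N$3$2 + N$0$0 * N$2$2 * N$3$3) = - (N$0$3 * N$1$2 * N$2$1 * N$3$0 - N$0$3 * N$1$2 * N$2$0 * N$3$1 - N$0$3 * N$1$1 * N$2$2 * N$3$0 + N$0$3 * N$1$1 * N$2$0 * N$3$2 + N$0$3 * N$1$0 * N$2$2 * N$3$1 - N$0$3 * N$1$0 * N$2$1 * N$3$2 - N$0$2 * N$1$3 * N$2$1 * N$3$0 + N$0$2 * N$1$3 * N$2$0 * N$3$1 + N$0$2 * N$1$1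 * N$2$3 * N$3$0 - N$0$2 * N$1$1 * N$2$0 * N$3$3 - N$0$2 * N$1$0 * N$2$3 * N$3$1 + N$0$2 * N$1$0 * N$2$1 * N$3$3 + N$0$1 * N$1$3 * N$2$2 * N$3$0 - N$0$1 * N$1$3 * N$2$0 * N$3$2 - N$0$1 * N$1$2 * N$2$3 * N$3$0 + N$0$1 * N$1$2 * N$2$0 * N$3$3 + N$0$1 * N$1$0 * N$2$3 * N$3$2 - N$0$1 * N$1$0 * N$2$2 * N$3$3 - N$0$0 * N$1$3 * N$2$2 * N$3$1 + N$0$0 * N$1$3 * N$2$1 * N$3$2 + N$0$0 * N$1$2 * N$2$3 * N$3$1 - N$0$0 * N$1$2 * N$2$1 * N$3$3 - N$0$0 * N$1$1 * N$2$3 * N$3$2 + N$0$0 * N$1$1 * N$2$2 * N$3$3) * (- N$0$3 * N$2$2 + N$0$2 * N$2$3)" by algebra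
  note j_01_13 = j_01_13[unfolded adj_10 adj_31 adj_30 adj_11 det]
  have j_02_01: "(- N$1$3 * N$2$2 * N$3$1 + N$1$3 * N$2$1 * N$3$2 + N$1$2 * N$2$3 * N$3$1 - N$1$2 * N$2$1 * N$3$3 - N$1$1 * N$2$3 * N$3$2 + N$1$1 * N$2$2 * N$3$3) * (N$0$3 * N$2$1 * N$3$0 - N$0$3 * N$2$0 * N$3$1 - N$0$1 * N$2$3 * N$3$0 + N$0$1 * N$2$0 * N$3$3 + N$0$0 * N$2$3 * N$3$1 - N$0$0 * N$2$1 * N$3$3) - (N$0$3 * N$2$2 * N$3$1 - N$0$3 * N$2$1 * N$3$2 - N$0$2 * N$2$3 * N$3$1 + N$0$2 * N$2$1 * N$3$3 + N$0$1 * N$2$3 * N$3$2 - N$0$1 * N$2$2 * N$3$3) * (- N$1$3 * N$2$1 * N$3$0 + N$1$3 * N$2$0 * N$3$1 + N$1$1 * N$2$3 * N$3$0 - N$1$1 * N$2$0 * N$3$3 - N$1$0 * N$2$3 * N$3$1 + N$1$0 * N$2$1 * N$3$3) = - (N$0$3 * N$1$2 * N$2$1 * N$3$0 - N$0$3 * N$1$2 * N$2$0 * N$3$1 - N$0$3 * N$1$1 * N$2$2 * N$3$0 + N$0$3 * N$1$1 * N$2$0 * N$3$2 + N$0$3 * N$1$0 * N$2$2 * N$3$1 - N$0$3 * N$1$0 * N$2$1 * N$3$2 - N$0$2 * N$1$3 * N$2$1 * N$3$0 + N$0$2 * N$1$3 * N$2$0 * N$3$1 + N$0$2 * N$1$1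 * N$2$3 * N$3$0 - N$0$2 * N$1$1 * N$2$0 * N$3$3 - N$0$2 * N$1$0 * N$2$3 * N$3$1 + N$0$2 * N$1$0 * N$2$1 * N$3$3 + N$0$1 * N$1$3 * N$2$2 * N$3$0 - N$0$1 * N$1$3 * N$2$0 * N$3$2 - N$0$1 * N$1$2 * N$2$3 * N$3$0 + N$0$1 * N$1$2 * N$2$0 * N$3$3 + N$0$1 * N$1$0 * N$2$3 * N$3$2 - N$0$1 * N$1$0 * N$2$2 * N$3$3 - N$0$0 * N$1$3 * N$2$2 * N$3$1 + N$0$0 * N$1$3 * N$2$1 * N$3$2 + N$0$0 * N$1$2 * N$2$3 * N$3$1 - N$0$0 * N$1$2 * N$2$1 * N$3$3 - N$0$0 * N$1$1 * N$2$3 * N$3$2 + N$0$0 * N$1$1 * N$2$2 * N$3$3) * (- N$2$3 * N$3$1 + N$2$1 * N$3$3)" by algebra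
  note j_02_01 = j_02_01[unfolded adj_00 adj_12 adj_10 adj_02 det]
  have j_02_03: "(- N$1$3 * N$2$2 * N$3$1 + N$1$3 * N$2$1 * N$3$2 + N$1$2 * N$2$3 * N$3$1 - N$1$2 * N$2$1 * N$3$3 - N$1$1 * N$2$3 * N$3$2 + N$1$1 * N$2$2 * N$3$3) * (N$0$3 * N$1$1 * N$2$0 - N$0$3 * N$1$0 * N$2$1 - N$0$1 * N$1$3 * N$2$0 + N$0$1 * N$1$0 * N$2$3 + N$0$0 * N$1$3 * N$2$1 - N$0$0 * N$1$1 * N$2$3) - (N$0$3 * N$1$2 * N$2$1 - N$0$3 * N$1$1 * N$2$2 - N$0$2 * N$1$3 * N$2$1 + N$0$2 * N$1$1 * N$2$3 + N$0$1 * N$1$3 * N$2$2 - N$0$1 * N$1$2 * N$2$3) * (- N$1$3 * N$2$1 * N$3$0 + N$1$3 * N$2$0 * N$3$1 + N$1$1 * N$2$3 * N$3$0 - N$1$1 * N$2$0 * N$3$3 - N$1$0 * N$2$3 * N$3$1 + N$1$0 * N$2$1 * N$3$3) = - (N$0$3 * N$1$2 * N$2$1 * N$3$0 - N$0$3 * N$1$2 * N$2$0 * N$3$1 - N$0$3 * N$1$1 * N$2$2 * N$3$0 + N$0$3 * N$1$1 * N$2$0 * N$3$2 + N$0$3 * N$1$0 * N$2$2 * N$3$1 - N$0$3 * N$1$0 * N$2$1 * N$3$2 - N$0$2 * N$1$3 * N$2$1 * N$3$0 + N$0$2 * N$1$3 * N$2$0 * N$3$1 + N$0$2 * N$1$1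 * N$2$3 * N$3$0 - N$0$2 * N$1$1 * N$2$0 * N$3$3 - N$0$2 * N$1$0 * N$2$3 * N$3$1 + N$0$2 * N$1$0 * N$2$1 * N$3$3 + N$0$1 * N$1$3 * N$2$2 * N$3$0 - N$0$1 * N$1$3 * N$2$0 * N$3$2 - N$0$1 * N$1$2 * N$2$3 * N$3$0 + N$0$1 * N$1$2 * N$2$0 * N$3$3 + N$0$1 * N$1$0 * N$2$3 * N$3$2 - N$0$1 * N$1$0 * N$2$2 * N$3$3 - N$0$0 * N$1$3 * N$2$2 * N$3$1 + N$0$0 * N$1$3 * N$2$1 * N$3$2 + N$0$0 * N$1$2 * N$2$3 * N$3$1 - N$0$0 * N$1$2 * N$2$1 * N$3$3 - N$0$0 * N$1$1 * N$2$3 * N$3$2 + N$0$0 * N$1$1 * N$2$2 * N$3$3) * (- N$1$3 * N$2$1 + N$1$1 * N$2$3)" by algebra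
  note j_02_03 = j_02_03[unfolded adj_00 adj_32 adj_30 adj_02 det]
  have j_02_23: "(- N$0$3 * N$1$2 * N$3$1 + N$0$3 * N$1$1 * N$3$2 + N$0$2 * N$1$3 * N$3$1 - N$0$2 * N$1$1 * N$3$3 - N$0$1 * N$1$3 * N$3$2 + N$0$1 * N$1$2 * N$3$3) * (N$0$3 * N$1$1 * N$2$0 - N$0$3 * N$1$0 * N$2$1 - N$0$1 * N$1$3 * N$2$0 + N$0$1 * N$1$0 * N$2$3 + N$0$0 * N$1$3 * N$2$1 - N$0$0 * N$1$1 * N$2$3) - (N$0$3 * N$1$2 * N$2$1 - N$0$3 * N$1$1 * N$2$2 - N$0$2 * N$1$3 * N$2$1 + N$0$2 * N$1$1 * N$2$3 + N$0$1 * N$1$3 * N$2$2 - N$0$1 * N$1$2 * N$2$3) * (- N$0$3 * N$1$1 * N$3$0 + N$0$3 * N$1$0 * N$3$1 + N$0$1 * N$1$3 * N$3$0 - N$0$1 * N$1$0 * N$3$3 - N$0$0 * N$1$3 * N$3$1 + N$0$0 * N$1$1 * N$3$3) = - (N$0$3 * N$1$2 * N$2$1 * N$3$0 - N$0$3 * N$1$2 * N$2$0 * N$3$1 - N$0$3 * N$1$1 * N$2$2 * N$3$0 + N$0$3 * N$1$1 * N$2$0 * N$3$2 + N$0$3 * N$1$0 * N$2$2 * N$3$1 - N$0$3 * N$1$0 * N$2$1 * N$3$2 - N$0$2 * N$1$3 * N$2$1 * N$3$0 + N$0$2 * N$1$3 * N$2$0 * N$3$1 + N$0$2 * N$1$1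 * N$2$3 * N$3$0 - N$0$2 * N$1$1 * N$2$0 * N$3$3 - N$0$2 * N$1$0 * N$2$3 * N$3$1 + N$0$2 * N$1$0 * N$2$1 * N$3$3 + N$0$1 * N$1$3 * N$2$2 * N$3$0 - N$0$1 * N$1$3 * N$2$0 * N$3$2 - N$0$1 * N$1$2 * N$2$3 * N$3$0 + N$0$1 * N$1$2 * N$2$0 * N$3$3 + N$0$1 * N$1$0 * N$2$3 * N$3$2 - N$0$1 * N$1$0 * N$2$2 * N$3$3 - N$0$0 * N$1$3 * N$2$2 * N$3$1 + N$0$0 * N$1$3 * N$2$1 * N$3$2 + N$0$0 * N$1$2 * N$2$3 * N$3$1 - N$0$0 * N$1$2 * N$2$1 * N$3$3 - N$0$0 * N$1$1 * N$2$3 * N$3$2 + N$0$0 * N$1$1 * N$2$2 * N$3$3) * (- N$0$3 * N$1$1 + N$0$1 * N$1$3)" by algebra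
  note j_02_23 = j_02_23[unfolded adj_20 adj_32 adj_30 adj_22 det]
  have j_03_01: "(- N$1$3 * N$2$2 * N$3$1 + N$1$3 * N$2$1 * N$3$2 + N$1$2 * N$2$3 * N$3$1 - N$1$2 * N$2$1 * N$3$3 - N$1$1 * N$2$3 * N$3$2 + N$1$1 * N$2$2 * N$3$3) * (- N$0$2 * N$2$1 * N$3$0 + N$0$2 * N$2$0 * N$3$1 + N$0$1 * N$2$2 * N$3$0 - N$0$1 * N$2$0 * N$3$2 - N$0$0 * N$2$2 * N$3$1 + N$0$0 * N$2$1 * N$3$2) - (N$0$3 * N$2$2 * N$3$1 - N$0$3 * N$2$1 * N$3$2 - N$0$2 * N$2$3 * N$3$1 + N$0$2 * N$2$1 * N$3$3 + N$0$1 * N$2$3 * N$3$2 - N$0$1 * N$2$2 * N$3$3) * (N$1$2 * N$2$1 * N$3$0 - N$1$2 * N$2$0 * N$3$1 - N$1$1 * N$2$2 * N$3$0 + N$1$1 * N$2$0 * N$3$2 + N$1$0 * N$2$2 * N$3$1 - N$1$0 * N$2$1 * N$3$2) = (N$0$3 * N$1$2 * N$2$1 * N$3$0 - N$0$3 * N$1$2 * N$2$0 * N$3$1 - N$0$3 * N$1$1 * N$2$2 * N$3$0 + N$0$3 * N$1$1 * N$2$0 * N$3$2 + N$0$3 * N$1$0 * N$2$2 * N$3$1 - N$0$3 * N$1$0 * N$2$1 * N$3$2 - N$0$2 * N$1$3 * N$2$1 * N$3$0 + N$0$2 * N$1$3 * N$2$0 * N$3$1 + N$0$2 * N$1$1 *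 N$2$3 * N$3$0 - N$0$2 * N$1$1 * N$2$0 * N$3$3 - N$0$2 * N$1$0 * N$2$3 * N$3$1 + N$0$2 * N$1$0 * N$2$1 * N$3$3 + N$0$1 * N$1$3 * N$2$2 * N$3$0 - N$0$1 * N$1$3 * N$2$0 * N$3$2 - N$0$1 * N$1$2 * N$2$3 * N$3$0 + N$0$1 * N$1$2 * N$2$0 * N$3$3 + N$0$1 * N$1$0 * N$2$3 * N$3$2 - N$0$1 * N$1$0 * N$2$2 * N$3$3 - N$0$0 * N$1$3 * N$2$2 * N$3$1 + N$0$0 * N$1$3 * N$2$1 * N$3$2 + N$0$0 * N$1$2 * N$2$3 * N$3$1 - N$0$0 * N$1$2 * N$2$1 * N$3$3 - N$0$0 * N$1$1 * N$2$3 * N$3$2 + N$0$0 * N$1$1 * N$2$2 * N$3$3) * (- N$2$2 * N$3$1 + N$2$1 * N$3$2)" by algebra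
  note j_03_01 = j_03_01[unfolded adj_00 adj_13 adj_10 adj_03 det]
  have j_03_02: "(- N$1$3 * N$2$2 * N$3$1 + N$1$3 * N$2$1 * N$3$2 + N$1$2 * N$2$3 * N$3$1 - N$1$2 * N$2$1 * N$3$3 - N$1$1 * N$2$3 * N$3$2 + N$1$1 * N$2$2 * N$3$3) * (N$0$2 * N$1$1 * N$3$0 - N$0$2 * N$1$0 * N$3$1 - N$0$1 * N$1$2 * N$3$0 + N$0$1 * N$1$0 * N$3$2 + N$0$0 * N$1$2 * N$3$1 - N$0$0 * N$1$1 * N$3$2) - (- N$0$3 * N$1$2 * N$3$1 + N$0$3 * N$1$1 * N$3$2 + N$0$2 * N$1$3 * N$3$1 - N$0$2 * N$1$1 * N$3$3 - N$0$1 * N$1$3 * N$3$2 + N$0$1 * N$1$2 * N$3$3) * (N$1$2 * N$2$1 * N$3$0 - N$1$2 * N$2$0 * N$3$1 - N$1$1 * N$2$2 * N$3$0 + N$1$1 * N$2$0 * N$3$2 + N$1$0 * N$2$2 * N$3$1 - N$1$0 * N$2$1 * N$3$2) = - (N$0$3 * N$1$2 * N$2$1 * N$3$0 - N$0$3 * N$1$2 * N$2$0 * N$3$1 - N$0$3 * N$1$1 * N$2$2 * N$3$0 + N$0$3 * N$1$1 * N$2$0 * N$3$2 + N$0$3 * N$1$0 * N$2$2 * N$3$1 - N$0$3 * N$1$0 * N$2$1 * N$3$2 - N$0$2 * N$1$3 * N$2$1 * N$3$0 + N$0$2 * N$1$3 * N$2$0 * N$3$1 + N$0$2 * N$1$1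 * N$2$3 * N$3$0 - N$0$2 * N$1$1 * N$2$0 * N$3$3 - N$0$2 * N$1$0 * N$2$3 * N$3$1 + N$0$2 * N$1$0 * N$2$1 * N$3$3 + N$0$1 * N$1$3 * N$2$2 * N$3$0 - N$0$1 * N$1$3 * N$2$0 * N$3$2 - N$0$1 * N$1$2 * N$2$3 * N$3$0 + N$0$1 * N$1$2 * N$2$0 * N$3$3 + N$0$1 * N$1$0 * N$2$3 * N$3$2 - N$0$1 * N$1$0 * N$2$2 * N$3$3 - N$0$0 * N$1$3 * N$2$2 * N$3$1 + N$0$0 * N$1$3 * N$2$1 * N$3$2 + N$0$0 * N$1$2 * N$2$3 * N$3$1 - N$0$0 * N$1$2 * N$2$1 * N$3$3 - N$0$0 * N$1$1 * N$2$3 * N$3$2 + N$0$0 * N$1$1 * N$2$2 * N$3$3) * (- N$1$2 * N$3$1 + N$1$1 * N$3$2)" by algebra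
  note j_03_02 = j_03_02[unfolded adj_00 adj_23 adj_20 adj_03 det]
  have j_03_03: "(- N$1$3 * N$2$2 * N$3$1 + N$1$3 * N$2$1 * N$3$2 + N$1$2 * N$2$3 * N$3$1 - N$1$2 * N$2$1 * N$3$3 - N$1$1 * N$2$3 * N$3$2 + N$1$1 * N$2$2 * N$3$3) * (- N$0$2 * N$1$1 * N$2$0 + N$0$2 * N$1$0 * N$2$1 + N$0$1 * N$1$2 * N$2$0 - N$0$1 * N$1$0 * N$2$2 - N$0$0 * N$1$2 * N$2$1 + N$0$0 * N$1$1 * N$2$2) - (N$0$3 * N$1$2 * N$2$1 - N$0$3 * N$1$1 * N$2$2 - N$0$2 * N$1$3 * N$2$1 + N$0$2 * N$1$1 * N$2$3 + N$0$1 * N$1$3 * N$2$2 - N$0$1 * N$1$2 * N$2$3) * (N$1$2 * N$2$1 * N$3$0 - N$1$2 * N$2$0 * N$3$1 - N$1$1 * N$2$2 * N$3$0 + N$1$1 * N$2$0 * N$3$2 + N$1$0 * N$2$2 * N$3$1 - N$1$0 * N$2$1 * N$3$2) = (N$0$3 * N$1$2 * N$2$1 * N$3$0 - N$0$3 * N$1$2 * N$2$0 * N$3$1 - N$0$3 * N$1$1 * N$2$2 * N$3$0 + N$0$3 * N$1$1 * N$2$0 * N$3$2 + N$0$3 * N$1$0 * N$2$2 * N$3$1 - N$0$3 * N$1$0 * N$2$1 * N$3$2 - N$0$2 * N$1$3 * N$2$1 * N$3$0 + N$0$2 * N$1$3 * N$2$0 * N$3$1 + N$0$2 * N$1$1 *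 N$2$3 * N$3$0 - N$0$2 * N$1$1 * N$2$0 * N$3$3 - N$0$2 * N$1$0 * N$2$3 * N$3$1 + N$0$2 * N$1$0 * N$2$1 * N$3$3 + N$0$1 * N$1$3 * N$2$2 * N$3$0 - N$0$1 * N$1$3 * N$2$0 * N$3$2 - N$0$1 * N$1$2 * N$2$3 * N$3$0 + N$0$1 * N$1$2 * N$2$0 * N$3$3 + N$0$1 * N$1$0 * N$2$3 * N$3$2 - N$0$1 * N$1$0 * N$2$2 * N$3$3 - N$0$0 * N$1$3 * N$2$2 * N$3$1 + N$0$0 * N$1$3 * N$2$1 * N$3$2 + N$0$0 * N$1$2 * N$2$3 * N$3$1 - N$0$0 * N$1$2 * N$2$1 * N$3$3 - N$0$0 * N$1$1 * N$2$3 * N$3$2 + N$0$0 * N$1$1 * N$2$2 * N$3$3) * (- N$1$2 * N$2$1 + N$1$1 * N$2$2)" by algebra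
  note j_03_03 = j_03_03[unfolded adj_00 adj_33 adj_30 adj_03 det]
  have j_03_12: "(N$0$3 * N$2$2 * N$3$1 - N$0$3 * N$2$1 * N$3$2 - N$0$2 * N$2$3 * N$3$1 + N$0$2 * N$2$1 * N$3$3 + N$0$1 * N$2$3 * N$3$2 - N$0$1 * N$2$2 * N$3$3) * (N$0$2 * N$1$1 * N$3$0 - N$0$2 * N$1$0 * N$3$1 - N$0$1 * N$1$2 * N$3$0 + N$0$1 * N$1$0 * N$3$2 + N$0$0 * N$1$2 * N$3$1 - N$0$0 * N$1$1 * N$3$2) - (- N$0$3 * N$1$2 * N$3$1 + N$0$3 * N$1$1 * N$3$2 + N$0$2 * N$1$3 * N$3$1 - N$0$2 * N$1$1 * N$3$3 - N$0$1 * N$1$3 * N$3$2 + N$0$1 * N$1$2 * N$3$3) * (- N$0$2 * N$2$1 * N$3$0 + N$0$2 * N$2$0 * N$3$1 + N$0$1 * N$2$2 * N$3$0 - N$0$1 * N$2$0 * N$3$2 - N$0$0 * N$2$2 * N$3$1 + N$0$0 * N$2$1 * N$3$2) = (N$0$3 * N$1$2 * N$2$1 * N$3$0 - N$0$3 * N$1$2 * N$2$0 * N$3$1 - N$0$3 * N$1$1 * N$2$2 * N$3$0 + N$0$3 * N$1$1 * N$2$0 * N$3$2 + N$0$3 * N$1$0 * N$2$2 * N$3$1 - N$0$3 * N$1$0 * N$2$1 * N$3$2 - N$0$2 * N$1$3 * N$2$1 * N$3$0 + N$0$2 * N$1$3 * N$2$0 * N$3$1 + N$0$2 * N$1$1 *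 N$2$3 * N$3$0 - N$0$2 * N$1$1 * N$2$0 * N$3$3 - N$0$2 * N$1$0 * N$2$3 * N$3$1 + N$0$2 * N$1$0 * N$2$1 * N$3$3 + N$0$1 * N$1$3 * N$2$2 * N$3$0 - N$0$1 * N$1$3 * N$2$0 * N$3$2 - N$0$1 * N$1$2 * N$2$3 * N$3$0 + N$0$1 * N$1$2 * N$2$0 * N$3$3 + N$0$1 * N$1$0 * N$2$3 * N$3$2 - N$0$1 * N$1$0 * N$2$2 * N$3$3 - N$0$0 * N$1$3 * N$2$2 * N$3$1 + N$0$0 * N$1$3 * N$2$1 * N$3$2 + N$0$0 * N$1$2 * N$2$3 * N$3$1 - N$0$0 * N$1$2 * N$2$1 * N$3$3 - N$0$0 * N$1$1 * N$2$3 * N$3$2 + N$0$0 * N$1$1 * N$2$2 * N$3$3) * (- N$0$2 * N$3$1 + N$0$1 * N$3$2)" by algebra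
  note j_03_12 = j_03_12[unfolded adj_10 adj_23 adj_20 adj_13 det]
  have j_03_13: "(N$0$3 * N$2$2 * N$3$1 - N$0$3 * N$2$1 * N$3$2 - N$0$2 * N$2$3 * N$3$1 + N$0$2 * N$2$1 * N$3$3 + N$0$1 * N$2$3 * N$3$2 - N$0$1 * N$2$2 * N$3$3) * (- N$0$2 * N$1$1 * N$2$0 + N$0$2 * N$1$0 * N$2$1 + N$0$1 * N$1$2 * N$2$0 - N$0$1 * N$1$0 * N$2$2 - N$0$0 * N$1$2 * N$2$1 + N$0$0 * N$1$1 * N$2$2) - (N$0$3 * N$1$2 * N$2$1 - N$0$3 * N$1$1 * N$2$2 - N$0$2 * N$1$3 * N$2$1 + N$0$2 * N$1$1 * N$2$3 + N$0$1 * N$1$3 * N$2$2 - N$0$1 * N$1$2 * N$2$3) * (- N$0$2 * N$2$1 * N$3$0 + N$0$2 * N$2$0 * N$3$1 + N$0$1 * N$2$2 * N$3$0 - N$0$1 * N$2$0 * N$3$2 - N$0$0 * N$2$2 * N$3$1 + N$0$0 * N$2$1 * N$3$2) = - (N$0$3 * N$1$2 * N$2$1 * N$3$0 - N$0$3 * N$1$2 * N$2$0 * N$3$1 - N$0$3 * N$1$1 * N$2$2 * N$3$0 + N$0$3 * N$1$1 * N$2$0 * N$3$2 + N$0$3 * N$1$0 * N$2$2 * N$3$1 - N$0$3 * N$1$0 * N$2$1 * N$3$2 - N$0$2 * N$1$3 * N$2$1 * N$3$0 + N$0$2 * N$1$3 * N$2$0 * N$3$1 + N$0$2 * N$1$1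 * N$2$3 * N$3$0 - N$0$2 * N$1$1 * N$2$0 * N$3$3 - N$0$2 * N$1$0 * N$2$3 * N$3$1 + N$0$2 * N$1$0 * N$2$1 * N$3$3 + N$0$1 * N$1$3 * N$2$2 * N$3$0 - N$0$1 * N$1$3 * N$2$0 * N$3$2 - N$0$1 * N$1$2 * N$2$3 * N$3$0 + N$0$1 * N$1$2 * N$2$0 * N$3$3 + N$0$1 * N$1$0 * N$2$3 * N$3$2 - N$0$1 * N$1$0 * N$2$2 * N$3$3 - N$0$0 * N$1$3 * N$2$2 * N$3$1 + N$0$0 * N$1$3 * N$2$1 * N$3$2 + N$0$0 * N$1$2 * N$2$3 * N$3$1 - N$0$0 * N$1$2 * N$2$1 * N$3$3 - N$0$0 * N$1$1 * N$2$3 * N$3$2 + N$0$0 * N$1$1 * N$2$2 * N$3$3) * (- N$0$2 * N$2$1 + N$0$1 * N$2$2)" by algebra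
  note j_03_13 = j_03_13[unfolded adj_10 adj_33 adj_30 adj_13 det]
  have j_03_23: "(- N$0$3 * N$1$2 * N$3$1 + N$0$3 * N$1$1 * N$3$2 + N$0$2 * N$1$3 * N$3$1 - N$0$2 * N$1$1 * N$3$3 - N$0$1 * N$1$3 * N$3$2 + N$0$1 * N$1$2 * N$3$3) * (- N$0$2 * N$1$1 * N$2$0 + N$0$2 * N$1$0 * N$2$1 + N$0$1 * N$1$2 * N$2$0 - N$0$1 * N$1$0 * N$2$2 - N$0$0 * N$1$2 * N$2$1 + N$0$0 * N$1$1 * N$2$2) - (N$0$3 * N$1$2 * N$2$1 - N$0$3 * N$1$1 * N$2$2 - N$0$2 * N$1$3 * N$2$1 + N$0$2 * N$1$1 * N$2$3 + N$0$1 * N$1$3 * N$2$2 - N$0$1 * N$1$2 * N$2$3) * (N$0$2 * N$1$1 * N$3$0 - N$0$2 * N$1$0 * N$3$1 - N$0$1 * N$1$2 * N$3$0 + N$0$1 * N$1$0 * N$3$2 + N$0$0 * N$1$2 * N$3$1 - N$0$0 * N$1$1 * N$3$2) = (N$0$3 * N$1$2 * N$2$1 * N$3$0 - N$0$3 * N$1$2 * N$2$0 * N$3$1 - N$0$3 * N$1$1 * N$2$2 * N$3$0 + N$0$3 * N$1$1 * N$2$0 * N$3$2 + N$0$3 * N$1$0 * N$2$2 * N$3$1 - N$0$3 * N$1$0 * N$2$1 * N$3$2 - N$0$2 * N$1$3 * N$2$1 * N$3$0 + N$0$2 * N$1$3 * N$2$0 * N$3$1 + N$0$2 * N$1$1 *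 N$2$3 * N$3$0 - N$0$2 * N$1$1 * N$2$0 * N$3$3 - N$0$2 * N$1$0 * N$2$3 * N$3$1 + N$0$2 * N$1$0 * N$2$1 * N$3$3 + N$0$1 * N$1$3 * N$2$2 * N$3$0 - N$0$1 * N$1$3 * N$2$0 * N$3$2 - N$0$1 * N$1$2 * N$2$3 * N$3$0 + N$0$1 * N$1$2 * N$2$0 * N$3$3 + N$0$1 * N$1$0 * N$2$3 * N$3$2 - N$0$1 * N$1$0 * N$2$2 * N$3$3 - N$0$0 * N$1$3 * N$2$2 * N$3$1 + N$0$0 * N$1$3 * N$2$1 * N$3$2 + N$0$0 * N$1$2 * N$2$3 * N$3$1 - N$0$0 * N$1$2 * N$2$1 * N$3$3 - N$0$0 * N$1$1 * N$2$3 * N$3$2 + N$0$0 * N$1$1 * N$2$2 * N$3$3) * (- N$0$2 * N$1$1 + N$0$1 * N$1$2)" by algebra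
  note j_03_23 = j_03_23[unfolded adj_20 adj_33 adj_30 adj_23 det]
  have j_13_01: "(N$1$3 * N$2$2 * N$3$0 - N$1$3 * N$2$0 * N$3$2 - N$1$2 * N$2$3 * N$3$0 + N$1$2 * N$2$0 * N$3$3 + N$1$0 * N$2$3 * N$3$2 - N$1$0 * N$2$2 * N$3$3) * (- N$0$2 * N$2$1 * N$3$0 + N$0$2 * N$2$0 * N$3$1 + N$0$1 * N$2$2 * N$3$0 - N$0$1 * N$2$0 * N$3$2 - N$0$0 * N$2$2 * N$3$1 + N$0$0 * N$2$1 * N$3$2) - (- N$0$3 * N$2$2 * N$3$0 + N$0$3 * N$2$0 * N$3$2 + N$0$2 * N$2$3 * N$3$0 - N$0$2 * N$2$0 * N$3$3 - N$0$0 * N$2$3 * N$3$2 + N$0$0 * N$2$2 * N$3$3) * (N$1$2 * N$2$1 * N$3$0 - N$1$2 * N$2$0 * N$3$1 - N$1$1 * N$2$2 * N$3$0 + N$1$1 * N$2$0 * N$3$2 + N$1$0 * N$2$2 * N$3$1 - N$1$0 * N$2$1 * N$3$2) = - (N$0$3 * N$1$2 * N$2$1 * N$3$0 - N$0$3 * N$1$2 * N$2$0 * N$3$1 - N$0$3 * N$1$1 * N$2$2 * N$3$0 + N$0$3 * N$1$1 * N$2$0 * N$3$2 + N$0$3 * N$1$0 * N$2$2 * N$3$1 - N$0$3 * N$1$0 * N$2$1 * N$3$2 - N$0$2 * N$1$3 * N$2$1 * N$3$0 + N$0$2 * N$1$3 * N$2$0 * N$3$1 + N$0$2 * N$1$1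 * N$2$3 * N$3$0 - N$0$2 * N$1$1 * N$2$0 * N$3$3 - N$0$2 * N$1$0 * N$2$3 * N$3$1 + N$0$2 * N$1$0 * N$2$1 * N$3$3 + N$0$1 * N$1$3 * N$2$2 * N$3$0 - N$0$1 * N$1$3 * N$2$0 * N$3$2 - N$0$1 * N$1$2 * N$2$3 * N$3$0 + N$0$1 * N$1$2 * N$2$0 * N$3$3 + N$0$1 * N$1$0 * N$2$3 * N$3$2 - N$0$1 * N$1$0 * N$2$2 * N$3$3 - N$0$0 * N$1$3 * N$2$2 * N$3$1 + N$0$0 * N$1$3 * N$2$1 * N$3$2 + N$0$0 * N$1$2 * N$2$3 * N$3$1 - N$0$0 * N$1$2 * N$2$1 * N$3$3 - N$0$0 * N$1$1 * N$2$3 * N$3$2 + N$0$0 * N$1$1 * N$2$2 * N$3$3) * (- N$2$2 * N$3$0 + N$2$0 * N$3$2)" by algebra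
  note j_13_01 = j_13_01[unfolded adj_01 adj_13 adj_11 adj_03 det]
  have j_13_03: "(N$1$3 * N$2$2 * N$3$0 - N$1$3 * N$2$0 * N$3$2 - N$1$2 * N$2$3 * N$3$0 + N$1$2 * N$2$0 * N$3$3 + N$1$0 * N$2$3 * N$3$2 - N$1$0 * N$2$2 * N$3$3) * (- N$0$2 * N$1$1 * N$2$0 + N$0$2 * N$1$0 * N$2$1 + N$0$1 * N$1$2 * N$2$0 - N$0$1 * N$1$0 * N$2$2 - N$0$0 * N$1$2 * N$2$1 + N$0$0 * N$1$1 * N$2$2) - (- N$0$3 * N$1$2 * N$2$0 + N$0$3 * N$1$0 * N$2$2 + N$0$2 * N$1$3 * N$2$0 - N$0$2 * N$1$0 * N$2$3 - N$0$0 * N$1$3 * N$2$2 + N$0$0 * N$1$2 * N$2$3) * (N$1$2 * N$2$1 * N$3$0 - N$1$2 * N$2$0 * N$3$1 - N$1$1 * N$2$2 * N$3$0 + N$1$1 * N$2$0 * N$3$2 + N$1$0 * N$2$2 * N$3$1 - N$1$0 * N$2$1 * N$3$2) = - (N$0$3 * N$1$2 * N$2$1 * N$3$0 - N$0$3 * N$1$2 * N$2$0 * N$3$1 - N$0$3 * N$1$1 * N$2$2 * N$3$0 + N$0$3 * N$1$1 * N$2$0 * N$3$2 + N$0$3 * N$1$0 * N$2$2 * N$3$1 - N$0$3 * N$1$0 * N$2$1 * N$3$2 - N$0$2 * N$1$3 * N$2$1 * N$3$0 + N$0$2 * N$1$3 * N$2$0 * N$3$1 + N$0$2 * N$1$1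 * N$2$3 * N$3$0 - N$0$2 * N$1$1 * N$2$0 * N$3$3 - N$0$2 * N$1$0 * N$2$3 * N$3$1 + N$0$2 * N$1$0 * N$2$1 * N$3$3 + N$0$1 * N$1$3 * N$2$2 * N$3$0 - N$0$1 * N$1$3 * N$2$0 * N$3$2 - N$0$1 * N$1$2 * N$2$3 * N$3$0 + N$0$1 * N$1$2 * N$2$0 * N$3$3 + N$0$1 * N$1$0 * N$2$3 * N$3$2 - N$0$1 * N$1$0 * N$2$2 * N$3$3 - N$0$0 * N$1$3 * N$2$2 * N$3$1 + N$0$0 * N$1$3 * N$2$1 * N$3$2 + N$0$0 * N$1$2 * N$2$3 * N$3$1 - N$0$0 * N$1$2 * N$2$1 * N$3$3 - N$0$0 * N$1$1 * N$2$3 * N$3$2 + N$0$0 * N$1$1 * N$2$2 * N$3$3) * (- N$1$2 * N$2$0 + N$1$0 * N$2$2)" by algebra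
  note j_13_03 = j_13_03[unfolded adj_01 adj_33 adj_31 adj_03 det]
  have j_13_23: "(N$0$3 * N$1$2 * N$3$0 - N$0$3 * N$1$0 * N$3$2 - N$0$2 * N$1$3 * N$3$0 + N$0$2 * N$1$0 * N$3$3 + N$0$0 * N$1$3 * N$3$2 - N$0$0 * N$1$2 * N$3$3) * (- N$0$2 * N$1$1 * N$2$0 + N$0$2 * N$1$0 * N$2$1 + N$0$1 * N$1$2 * N$2$0 - N$0$1 * N$1$0 * N$2$2 - N$0$0 * N$1$2 * N$2$1 + N$0$0 * N$1$1 * N$2$2) - (- N$0$3 * N$1$2 * N$2$0 + N$0$3 * N$1$0 * N$2$2 + N$0$2 * N$1$3 * N$2$0 - N$0$2 * N$1$0 * N$2$3 - N$0$0 * N$1$3 * N$2$2 + N$0$0 * N$1$2 * N$2$3) * (N$0$2 * N$1$1 * N$3$0 - N$0$2 * N$1$0 * N$3$1 - N$0$1 * N$1$2 * N$3$0 + N$0$1 * N$1$0 * N$3$2 + N$0$0 * N$1$2 * N$3$1 - N$0$0 * N$1$1 * N$3$2) = - (N$0$3 * N$1$2 * N$2$1 * N$3$0 - N$0$3 * N$1$2 * N$2$0 * N$3$1 - N$0$3 * N$1$1 * N$2$2 * N$3$0 + N$0$3 * N$1$1 * N$2$0 * N$3$2 + N$0$3 * N$1$0 * N$2$2 * N$3$1 - N$0$3 * N$1$0 * N$2$1 * N$3$2 - N$0$2 * N$1$3 * N$2$1 * N$3$0 + N$0$2 * N$1$3 * N$2$0 * N$3$1 + N$0$2 * N$1$1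 * N$2$3 * N$3$0 - N$0$2 * N$1$1 * N$2$0 * N$3$3 - N$0$2 * N$1$0 * N$2$3 * N$3$1 + N$0$2 * N$1$0 * N$2$1 * N$3$3 + N$0$1 * N$1$3 * N$2$2 * N$3$0 - N$0$1 * N$1$3 * N$2$0 * N$3$2 - N$0$1 * N$1$2 * N$2$3 * N$3$0 + N$0$1 * N$1$2 * N$2$0 * N$3$3 + N$0$1 * N$1$0 * N$2$3 * N$3$2 - N$0$1 * N$1$0 * N$2$2 * N$3$3 - N$0$0 * N$1$3 * N$2$2 * N$3$1 + N$0$0 * N$1$3 * N$2$1 * N$3$2 + N$0$0 * N$1$2 * N$2$3 * N$3$1 - N$0$0 * N$1$2 * N$2$1 * N$3$3 - N$0$0 * N$1$1 * N$2$3 * N$3$2 + N$0$0 * N$1$1 * N$2$2 * N$3$3) * (- N$0$2 * N$1$0 + N$0$0 * N$1$2)" by algebra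
  note j_13_23 = j_13_23[unfolded adj_21 adj_33 adj_31 adj_23 det]
  have j_23_02: "(- N$1$3 * N$2$1 * N$3$0 + N$1$3 * N$2$0 * N$3$1 + N$1$1 * N$2$3 * N$3$0 - N$1$1 * N$2$0 * N$3$3 - N$1$0 * N$2$3 * N$3$1 + N$1$0 * N$2$1 * N$3$3) * (N$0$2 * N$1$1 * N$3$0 - N$0$2 * N$1$0 * N$3$1 - N$0$1 * N$1$2 * N$3$0 + N$0$1 * N$1$0 * N$3$2 + N$0$0 * N$1$2 * N$3$1 - N$0$0 * N$1$1 * N$3$2) - (- N$0$3 * N$1$1 * N$3$0 + N$0$3 * N$1$0 * N$3$1 + N$0$1 * N$1$3 * N$3$0 - N$0$1 * N$1$0 * N$3$3 - N$0$0 * N$1$3 * N$3$1 + N$0$0 * N$1$1 * N$3$3) * (N$1$2 * N$2$1 * N$3$0 - N$1$2 * N$2$0 * N$3$1 - N$1$1 * N$2$2 * N$3$0 + N$1$1 * N$2$0 * N$3$2 + N$1$0 * N$2$2 * N$3$1 - N$1$0 * N$2$1 * N$3$2) = - (N$0$3 * N$1$2 * N$2$1 * N$3$0 - N$0$3 * N$1$2 * N$2$0 * N$3$1 - N$0$3 * N$1$1 * N$2$2 * N$3$0 + N$0$3 * N$1$1 * N$2$0 * N$3$2 + N$0$3 * N$1$0 * N$2$2 * N$3$1 - N$0$3 * N$1$0 * N$2$1 * N$3$2 - N$0$2 * N$1$3 * N$2$1 * N$3$0 + N$0$2 * N$1$3 * N$2$0 * N$3$1 + N$0$2 * N$1$1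 * N$2$3 * N$3$0 - N$0$2 * N$1$1 * N$2$0 * N$3$3 - N$0$2 * N$1$0 * N$2$3 * N$3$1 + N$0$2 * N$1$0 * N$2$1 * N$3$3 + N$0$1 * N$1$3 * N$2$2 * N$3$0 - N$0$1 * N$1$3 * N$2$0 * N$3$2 - N$0$1 * N$1$2 * N$2$3 * N$3$0 + N$0$1 * N$1$2 * N$2$0 * N$3$3 + N$0$1 * N$1$0 * N$2$3 * N$3$2 - N$0$1 * N$1$0 * N$2$2 * N$3$3 - N$0$0 * N$1$3 * N$2$2 * N$3$1 + N$0$0 * N$1$3 * N$2$1 * N$3$2 + N$0$0 * N$1$2 * N$2$3 * N$3$1 - N$0$0 * N$1$2 * N$2$1 * N$3$3 - N$0$0 * N$1$1 * N$2$3 * N$3$2 + N$0$0 * N$1$1 * N$2$2 * N$3$3) * (- N$1$1 * N$3$0 + N$1$0 * N$3$1)" by algebra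
  note j_23_02 = j_23_02[unfolded adj_02 adj_23 adj_22 adj_03 det]
  have j_23_03: "(- N$1$3 * N$2$1 * N$3$0 + N$1$3 * N$2$0 * N$3$1 + N$1$1 * N$2$3 * N$3$0 - N$1$1 * N$2$0 * N$3$3 - N$1$0 * N$2$3 * N$3$1 + N$1$0 * N$2$1 * N$3$3) * (- N$0$2 * N$1$1 * N$2$0 + N$0$2 * N$1$0 * N$2$1 + N$0$1 * N$1$2 * N$2$0 - N$0$1 * N$1$0 * N$2$2 - N$0$0 * N$1$2 * N$2$1 + N$0$0 * N$1$1 * N$2$2) - (N$0$3 * N$1$1 * N$2$0 - N$0$3 * N$1$0 * N$2$1 - N$0$1 * N$1$3 * N$2$0 + N$0$1 * N$1$0 * N$2$3 + N$0$0 * N$1$3 * N$2$1 - N$0$0 * N$1$1 * N$2$3) * (N$1$2 * N$2$1 * N$3$0 - N$1$2 * N$2$0 * N$3$1 - N$1$1 * N$2$2 * N$3$0 + N$1$1 * N$2$0 * N$3$2 + N$1$0 * N$2$2 * N$3$1 - N$1$0 * N$2$1 * N$3$2) = (N$0$3 * N$1$2 * N$2$1 * N$3$0 - N$0$3 * N$1$2 * N$2$0 * N$3$1 - N$0$3 * N$1$1 * N$2$2 * N$3$0 + N$0$3 * N$1$1 * N$2$0 * N$3$2 + N$0$3 * N$1$0 * N$2$2 * N$3$1 - N$0$3 * N$1$0 * N$2$1 * N$3$2 - N$0$2 * N$1$3 * N$2$1 * N$3$0 + N$0$2 * N$1$3 * N$2$0 * N$3$1 + N$0$2 * N$1$1 *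 N$2$3 * N$3$0 - N$0$2 * N$1$1 * N$2$0 * N$3$3 - N$0$2 * N$1$0 * N$2$3 * N$3$1 + N$0$2 * N$1$0 * N$2$1 * N$3$3 + N$0$1 * N$1$3 * N$2$2 * N$3$0 - N$0$1 * N$1$3 * N$2$0 * N$3$2 - N$0$1 * N$1$2 * N$2$3 * N$3$0 + N$0$1 * N$1$2 * N$2$0 * N$3$3 + N$0$1 * N$1$0 * N$2$3 * N$3$2 - N$0$1 * N$1$0 * N$2$2 * N$3$3 - N$0$0 * N$1$3 * N$2$2 * N$3$1 + N$0$0 * N$1$3 * N$2$1 * N$3$2 + N$0$0 * N$1$2 * N$2$3 * N$3$1 - N$0$0 * N$1$2 * N$2$1 * N$3$3 - N$0$0 * N$1$1 * N$2$3 * N$3$2 + N$0$0 * N$1$1 * N$2$2 * N$3$3) * (- N$1$1 * N$2$0 + N$1$0 * N$2$1)" by algebra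
  note j_23_03 = j_23_03[unfolded adj_02 adj_33 adj_32 adj_03 det]
  have j_23_13: "(N$0$3 * N$2$1 * N$3$0 - N$0$3 * N$2$0 * N$3$1 - N$0$1 * N$2$3 * N$3$0 + N$0$1 * N$2$0 * N$3$3 + N$0$0 * N$2$3 * N$3$1 - N$0$0 * N$2$1 * N$3$3) * (- N$0$2 * N$1$1 * N$2$0 + N$0$2 * N$1$0 * N$2$1 + N$0$1 * N$1$2 * N$2$0 - N$0$1 * N$1$0 * N$2$2 - N$0$0 * N$1$2 * N$2$1 + N$0$0 * N$1$1 * N$2$2) - (N$0$3 * N$1$1 * N$2$0 - N$0$3 * N$1$0 * N$2$1 - N$0$1 * N$1$3 * N$2$0 + N$0$1 * N$1$0 * N$2$3 + N$0$0 * N$1$3 * N$2$1 - N$0$0 * N$1$1 * N$2$3) * (- N$0$2 * N$2$1 * N$3$0 + N$0$2 * N$2$0 * N$3$1 + N$0$1 * N$2$2 * N$3$0 - N$0$1 * N$2$0 * N$3$2 - N$0$0 * N$2$2 * N$3$1 + N$0$0 * N$2$1 * N$3$2) = - (N$0$3 * N$1$2 * N$2$1 * N$3$0 - N$0$3 * N$1$2 * N$2$0 * N$3$1 - N$0$3 * N$1$1 * N$2$2 * N$3$0 + N$0$3 * N$1$1 * N$2$0 * N$3$2 + N$0$3 * N$1$0 * N$2$2 * N$3$1 - N$0$3 * N$1$0 * N$2$1 * N$3$2 - N$0$2 * N$1$3 * N$2$1 * N$3$0 + N$0$2 * N$1$3 * N$2$0 * N$3$1 + N$0$2 * N$1$1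 * N$2$3 * N$3$0 - N$0$2 * N$1$1 * N$2$0 * N$3$3 - N$0$2 * N$1$0 * N$2$3 * N$3$1 + N$0$2 * N$1$0 * N$2$1 * N$3$3 + N$0$1 * N$1$3 * N$2$2 * N$3$0 - N$0$1 * N$1$3 * N$2$0 * N$3$2 - N$0$1 * N$1$2 * N$2$3 * N$3$0 + N$0$1 * N$1$2 * N$2$0 * N$3$3 + N$0$1 * N$1$0 * N$2$3 * N$3$2 - N$0$1 * N$1$0 * N$2$2 * N$3$3 - N$0$0 * N$1$3 * N$2$2 * N$3$1 + N$0$0 * N$1$3 * N$2$1 * N$3$2 + N$0$0 * N$1$2 * N$2$3 * N$3$1 - N$0$0 * N$1$2 * N$2$1 * N$3$3 - N$0$0 * N$1$1 * N$2$3 * N$3$2 + N$0$0 * N$1$1 * N$2$2 * N$3$3) * (- N$0$1 * N$2$0 + N$0$0 * N$2$1)" by algebra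
  note j_23_13 = j_23_13[unfolded adj_12 adj_33 adj_32 adj_13 det]
  have s0: "(N$0$0) * (N$0$3) = (N$0$1) * (N$0$2)" using o2_00 by algebra
  have s1: "(N$0$0) * (N$1$2) = (N$1$0) * (N$0$2)" using j_13_23 by algebra
  have s2: "(N$0$0) * (N$1$3) = (N$1$1) * (N$0$2)" using o2_01 j_03_23 by algebra
  have s3: "(N$0$1) * (N$1$2) = (N$1$0) * (N$0$3)" using j_03_23 o2_01 by algebra
  have s4: "(N$0$1) * (N$1$3) = (N$1$1) * (N$0$3)" using j_02_23 by algebra
  have s5: "(N$1$0) * (N$1$3) = (N$1$1) * (N$1$2)" using o2_11 by algebra
  have s6: "(N$0$0) * (N$2$1) = (N$0$1) * (N$2$0)" using j_23_13 by algebra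
  have s7: "(N$0$0) * (N$3$0) = (N$1$0) * (N$2$0)" using o1_00 by algebra
  have s8: "(N$0$0) * (N$3$1) = (N$1$1) * (N$2$0)" using o1_01 j_23_03 by algebra
  have s9: "(N$0$1) * (N$3$0) = (N$1$0) * (N$2$1)" using j_23_03 o1_01 by algebra
  have s10: "(N$0$1) * (N$3$1) = (N$1$1) * (N$2$1)" using o1_11 by algebra
  have s11: "(N$1$0) * (N$3$1) = (N$1$1) * (N$3$0)" using j_23_02 by algebra
  have s12: "(N$0$0) * (N$2$3) = (N$0$1) * (N$2$2)" using o2_02 j_03_13 by algebra
  have s13: "(N$0$0) * (N$3$2) = (N$1$0) * (N$2$2)" using o1_02 j_13_03 by algebra
  have s14: "(N$0$0) * (N$3$3) = (N$1$1) * (N$2$2)" using j_03_03 o1_12 o2_03 by algebra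
  have s15: "(N$0$1) * (N$3$2) = (N$1$0) * (N$2$3)" using o2_03 o1_03 j_03_12 by algebra
  have s16: "(N$0$1) * (N$3$3) = (N$1$1) * (N$2$3)" using o1_13 j_02_03 by algebra
  have s17: "(N$1$0) * (N$3$3) = (N$1$1) * (N$3$2)" using o2_13 j_03_02 by algebra
  have s18: "(N$0$2) * (N$2$1) = (N$0$3) * (N$2$0)" using j_03_13 o2_02 by algebra
  have s19: "(N$0$2) * (N$3$0) = (N$1$2) * (N$2$0)" using j_13_03 o1_02 by algebra
  have s20: "(N$0$2) * (N$3$1) = (N$1$3) * (N$2$0)" using j_03_12 o2_03 o1_03 by algebra
  have s21: "(N$0$3) * (N$3$0) = (N$1$2) * (N$2$1)" using j_03_03 o1_12 o2_03 by algebra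
  have s22: "(N$0$3) * (N$3$1) = (N$1$3) * (N$2$1)" using j_02_03 o1_13 by algebra
  have s23: "(N$1$2) * (N$3$1) = (N$1$3) * (N$3$0)" using j_03_02 o2_13 by algebra
  have s24: "(N$0$2) * (N$2$3) = (N$0$3) * (N$2$2)" using j_01_13 by algebra
  have s25: "(N$0$2) * (N$3$2) = (N$1$2) * (N$2$2)" using o1_22 by algebra
  have s26: "(N$0$2) * (N$3$3) = (N$1$3) * (N$2$2)" using o1_23 j_01_03 by algebra
  have s27: "(N$0$3) * (N$3$2) = (N$1$2) * (N$2$3)" using j_01_03 o1_23 by algebra
  have s28: "(N$0$3) * (N$3$3) = (N$1$3) * (N$2$3)" using o1_33 by algebra
  have s29: "(N$1$2) * (N$3$3) = (N$1$3) * (N$3$2)" using j_01_02 by algebra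
  have s30: "(N$2$0) * (N$2$3) = (N$2$1) * (N$2$2)" using o2_22 by algebra
  have s31: "(N$2$0) * (N$3$2) = (N$3$0) * (N$2$2)" using j_13_01 by algebra
  have s32: "(N$2$0) * (N$3$3) = (N$3$1) * (N$2$2)" using o2_23 j_03_01 by algebra
  have s33: "(N$2$1) * (N$3$2) = (N$3$0) * (N$2$3)" using j_03_01 o2_23 by algebra
  have s34: "(N$2$1) * (N$3$3) = (N$3$1) * (N$2$3)" using j_02_01 by algebra
  have s35: "(N$3$0) * (N$3$3) = (N$3$1) * (N$3$2)" using o2_33 by algebra
  show ?thesis using s0 s1 s2 s3 s4 s5 s6 s7 s8 s9 s10 s11 s12 s13 s14 s15 s16 s17 s18 s19 s20 s21 s22 s23 s24 s25 s26 s27 s28 s29 s30 s31 s32 s33 s34 s35 by blast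
qed

definition hi :: "4 \<Rightarrow> nat" where "hi x = (if x = 0 \<or> x = 1 then 0 else 1)"
definition lo :: "4 \<Rightarrow> nat" where "lo x = (if x = 0 \<or> x = 2 then 0 else 1)"
definition kron :: "(nat \<Rightarrow> complex) \<Rightarrow> (nat \<Rightarrow> complex) \<Rightarrow> complex^4^4" where
  "kron a b = (\<chi> x y. a (2 * hi x + hi y) * b (2 * lo x + lo y))"
definition Rf :: "complex^4^4 \<Rightarrow> nat \<Rightarrow> nat \<Rightarrow> complex" where
  "Rf N k l = N $ (of_nat (2 * (k div 2) + l div 2)) $ (of_nat (2 * (k mod 2) + l mod 2))"

lemma all_less4: "(\<forall>k<4. P k) \<longleftrightarrow> P 0 \<and> P 1 \<and> P 2 \<and> P (3::nat)"
  by (auto simp: less_Suc_eq numeral_eq_Suc)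

lemma rank1_ext:
  fixes R :: "nat \<Rightarrow> nat \<Rightarrow> complex"
  assumes "\<forall>k<4. \<forall>k'<4. \<forall>l<4. \<forall>l'<4. k < k' \<longrightarrow> l < l' \<longrightarrow> R k l * R k' l' = R k l' * R k' l"
  and "k < 4" "k' < 4" "l < 4" "l' < 4"
  shows "R k l * R k' l' = R k l' * R k' l"
proof -
  consider "k = k'" | "l = l'" | "k < k'" "l < l'" | "k < k'" "l' < l" | "k' < k" "l < l'" | "k' < k" "l' < l"
    by linarith
  then show ?thesis
  proof cases
    case 1 then show ?thesis by (simp add: mult.commute)
  next
    case 2 then show ?thesis by (simp add: mult.commute)
  next
    case 3 then show ?thesis using assms by blast
  next
    case 4 then show ?thesis using assms(1) assms(2-5) by (metis mult.commute)
  next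
    case 5 then show ?thesis using assms(1) assms(2-5) by (metis mult.commute)
  next
    case 6 then show ?thesis using assms(1) assms(2-5) by (metis mult.commute)
  qed
qed

lemma rank1_factor:
  fixes R :: "nat \<Rightarrow> nat \<Rightarrow> complex"
  assumes "\<forall>k<4. \<forall>k'<4. \<forall>l<4. \<forall>l'<4. k < k' \<longrightarrow> l < l' \<longrightarrow> R k l * R k' l' = R k l' * R k' l"
  shows "\<exists>u v. \<forall>k<4. \<forall>l<4. R k l = u k * v l"
proof (cases "\<forall>k<(4::nat). \<forall>l<(4::nat). R k l = 0")
  case True
  then show ?thesis by (intro exI[of _ "\<lambda>_::nat. 0::complex"]) auto
next
  case False
  then obtain k0 l0 where k0: "k0 < 4" "l0 < 4" "R k0 l0 \<noteq> 0" by auto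
  show ?thesis
  proof (rule exI[of _ "\<lambda>k::nat. R k l0"], rule exI[of _ "\<lambda>l::nat. R k0 l / R k0 l0"], intro allI impI)
    fix k l :: nat assume kl: "k < 4" "l < 4"
    have "R k l * R k0 l0 = R k l0 * R k0 l" using rank1_ext[OF assms kl(1) k0(1) kl(2) k0(2)] .
    then show "R k l = R k l0 * (R k0 l / R k0 l0)" using k0(3) by (simp add: field_simps)
  qed
qed

lemma Rf_kron_index: "N $ x $ y = Rf N (2 * hi x + hi y) (2 * lo x + lo y)"
proof -
  have "x \<in> {0,1,2,3}" "y \<in> {0,1,2,3}" using UNIV4 by auto
  then show ?thesis by (auto simp: Rf_def hi_def lo_def)
qed

lemma hi_lt: "hi x < 2" and lo_lt: "lo x < 2" by (auto simp: hi_def lo_def)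

lemma kron_of_rank1:
  assumes "\<forall>k<4. \<forall>k'<4. \<forall>l<4. \<forall>l'<4. k < k' \<longrightarrow> l < l' \<longrightarrow> Rf N k l * Rf N k' l' = Rf N k l' * Rf N k' l"
  shows "\<exists>a b. N = kron a b"
proof -
  obtain u v where uv: "\<forall>k<4. \<forall>l<4. Rf N k l = u k * v l" using rank1_factor[OF assms] by blast
  have "N $ x $ y = kron u v $ x $ y" for x y
  proof -
    have "2 * hi x + hi y < 4" "2 * lo x + lo y < 4" using hi_lt[of x] hi_lt[of y] lo_lt[of x] lo_lt[of y] by linarith+
    then show ?thesis using uv by (simp add: kron_def Rf_kron_index[of N x y])
  qed
  then show ?thesis by (auto simp: vec_eq_iff)
qed

lemma SO4_rank1:
  fixes M :: "complex^4^4"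
  assumes "transpose M ** M = mat 1" "det M = 1"
  shows "\<forall>k<4. \<forall>k'<4. \<forall>l<4. \<forall>l'<4. k < k' \<longrightarrow> l < l' \<longrightarrow>
     Rf (Pm ** M ** Pinv) k l * Rf (Pm ** M ** Pinv) k' l' = Rf (Pm ** M ** Pinv) k l' * Rf (Pm ** M ** Pinv) k' l"
proof -
  note f = so4_facts[OF assms]
  note c = core_N[OF f]
  show ?thesis unfolding all_less4 Rf_def using c by simp
qed

lemma mat_mul_left': "mat c ** B = (\<chi> i j. c * (B $ i $ j :: 'a::comm_ring_1))"
  unfolding matrix_matrix_mult_def mat_def
  by (auto simp: if_distrib if_distribR sum.delta'[OF finite] cong: if_cong)

lemma mat_mul_left: "(mat c ** B) $ i $ j = c * (B $ i $ j :: 'a::comm_ring_1)"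
  by (simp add: mat_mul_left')

lemma mat_comm: "(A::'a::comm_ring_1^'n^'n) ** (mat c ** B) = mat c ** (A ** B)"
  by (simp only: mat_mul_left') (simp add: vec_eq_iff matrix_matrix_mult_def sum_distrib_left mult_ac)

lemma mat_mat: "mat a ** mat b = (mat (a * b) :: 'a::comm_ring_1^'n^'n)"
  by (simp add: vec_eq_iff mat_mul_left) (simp add: mat_def)

lemma det_mat: "det (mat r :: complex^4^4) = r ^ 4"
  by (subst det_diagonal) (auto simp: mat_def prod4 power4_eq_xxxx)

lemma kron_nth: "kron a b $ x $ y = a (2 * hi x + hi y) * b (2 * lo x + lo y)"
  by (simp add: kron_def)
lemma hi_simps[simp]: "hi 0 = 0" "hi 1 = 0" "hi 2 = 1" "hi 3 = 1"
  by (simp_all add: hi_def)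
lemma lo_simps[simp]: "lo 0 = 0" "lo 1 = 1" "lo 2 = 0" "lo 3 = 1"
  by (simp_all add: lo_def)

lemma kron_orth: "transpose (kron a b) ** Jm ** kron a b = mat ((a 0 * a 3 - a 1 * a 2) * (b 0 * b 3 - b 1 * b 2)) ** Jm"
  apply (simp only: mat_mul_left')
  apply (rule mat_eqI4)
  apply (simp add: matrix_matrix_mult_def sum4 transpose_def kron_nth Jm_def)
  apply (elim disjE; simp add: eval_nat_numeral field_simps)
  done

lemma kron_det: "det (kron a b) = ((a 0 * a 3 - a 1 * a 2) * (b 0 * b 3 - b 1 * b 2))^2"
  by (simp add: det4 kron_nth eval_nat_numeral) algebra

lemma kron_in_cone:
  assumes nz: "(a 0 * a 3 - a 1 * a 2) * (b 0 * b 3 - b 1 * b 2) \<noteq> 0"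
  shows "Pinv ** kron a b ** Pm \<in> cone_SO4_pts"
proof -
  define \<delta> where "\<delta> = (a 0 * a 3 - a 1 * a 2) * (b 0 * b 3 - b 1 * b 2)"
  define K where "K = kron a b"
  define M where "M = Pinv ** K ** Pm"
  have tP: "transpose Pm ** transpose Pinv = mat 1"
    by (metis Pinv_P matrix_transpose_mul transpose_mat)
  have "transpose M ** M = transpose Pm ** (transpose K ** (transpose Pinv ** Pinv) ** K) ** Pm"
    by (simp add: M_def matrix_transpose_mul matrix_mul_assoc)
  also have "\<dots> = transpose Pm ** (mat \<delta> ** (transpose Pinv ** Pinv)) ** Pm"
    by (simp add: tPinv_Pinv kron_orth K_def \<delta>_def)
  also have "\<dots> = mat \<delta> ** ((transpose Pm ** transpose Pinv) ** (Pinv ** Pm))"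
    by (simp only: mat_comm) (simp add: matrix_mul_assoc)
  also have "\<dots> = mat \<delta>" by (simp add: tP Pinv_P)
  finally have MM: "transpose M ** M = mat \<delta>" .
  have dM: "det M = \<delta>^2"
  proof -
    have "det M = det K * (det Pinv * det Pm)" by (simp add: M_def det_mul)
    also have "det Pinv * det Pm = 1" by (metis Pinv_P det_I det_mul)
    finally show ?thesis by (simp add: K_def kron_det \<delta>_def)
  qed
  have d0: "\<delta> \<noteq> 0" using nz by (simp add: \<delta>_def)
  define c where "c = csqrt \<delta>"
  have c2: "c^2 = \<delta>" by (simp add: c_def)
  have c0: "c \<noteq> 0" using c2 d0 by auto
  define M0 where "M0 = mat (1/c) ** M"
  have "(transpose M0 ** M0) $ i $ j = (transpose M ** M) $ i $ j / c^2" for i j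
    by (simp only: M0_def mat_mul_left') (simp add: matrix_matrix_mult_def transpose_def sum_divide_distrib power2_eq_square mult_ac)
  then have "(transpose M0 ** M0) $ i $ j = mat 1 $ i $ j" for i j
    using c2 c0 d0 by (simp add: MM mat_def)
  then have o: "transpose M0 ** M0 = mat 1" by (simp add: vec_eq_iff)
  have "det M0 = (1/c)^4 * \<delta>^2" by (simp add: M0_def det_mul det_mat dM)
  also have "\<dots> = 1" using c2 c0 by (simp add: field_simps power_mult_distrib flip: c2)
  finally have d: "det M0 = 1" .
  have "M = (\<chi> i j. c * M0 $ i $ j)"
    using c0 by (simp add: vec_eq_iff M0_def mat_mul_left)
  moreover have "M0 \<in> SO4" using o d by (simp add: SO4_def)
  ultimately show ?thesis unfolding cone_SO4_pts_def M_def K_def by blast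
qed

lemma cone_kron:
  assumes "M \<in> cone_SO4_pts"
  shows "\<exists>a b. Pm ** M ** Pinv = kron a b"
proof -
  obtain c M0 where M: "M = (\<chi> i j. c * M0 $ i $ j)" and M0: "M0 \<in> SO4"
    using assms by (auto simp: cone_SO4_pts_def)
  have "\<exists>a b. Pm ** M0 ** Pinv = kron a b"
    by (rule kron_of_rank1, rule SO4_rank1) (use M0 in \<open>auto simp: SO4_def\<close>)
  then obtain a b where ab: "Pm ** M0 ** Pinv = kron a b" by blast
  have "M = mat c ** M0" by (simp add: M vec_eq_iff mat_mul_left)
  then have "Pm ** M ** Pinv = (mat c ** (Pm ** M0)) ** Pinv" by (simp only: mat_comm)
  also have "\<dots> = mat c ** (Pm ** M0 ** Pinv)" by (simp add: matrix_mul_assoc)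
  also have "\<dots> = kron (\<lambda>k. c * a k) b" by (simp add: ab vec_eq_iff mat_mul_left kron_def)
  finally show ?thesis by blast
qed

definition xM :: "4 \<times> 4 \<Rightarrow> complex^4^4 \<Rightarrow> complex" where "xM p M = M $ fst p $ snd p"
definition xN :: "4 \<times> 4 \<Rightarrow> complex^4^4 \<Rightarrow> complex" where "xN p M = (Pm ** M ** Pinv) $ fst p $ snd p"

lemma fun_sum_apply: "(sum f A) x = (\<Sum>a\<in>A. f a x)"
  by (induction A rule: infinite_finite_induct) auto

lemma entry_expand:
  fixes A M B :: "complex^4^4"
  shows "(A ** M ** B) $ i $ j = (\<Sum>q\<in>(UNIV::(4\<times>4) set). A $ i $ fst q * B $ snd q $ j * M $ fst q $ snd q)"
proof -
  have "(A ** M ** B) $ i $ j = (\<Sum>k\<in>UNIV. \<Sum>n\<in>UNIV. A $ i $ n * M $ n $ k * B $ k $ j)"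
    by (simp add: matrix_matrix_mult_def sum_distrib_right)
  also have "\<dots> = (\<Sum>n\<in>UNIV. \<Sum>k\<in>UNIV. A $ i $ n * M $ n $ k * B $ k $ j)"
    by (rule sum.swap)
  also have "\<dots> = (\<Sum>u\<in>UNIV. \<Sum>v\<in>UNIV. A $ i $ u * B $ v $ j * M $ u $ v)"
    by (intro sum.cong refl) algebra
  also have "\<dots> = (\<Sum>q\<in>UNIV \<times> UNIV. A $ i $ fst q * B $ snd q $ j * M $ fst q $ snd q)"
    by (simp add: sum.cartesian_product case_prod_unfold)
  finally show ?thesis by simp
qed

lemma span_lin:
  assumes "\<And>M. f M = (\<Sum>q\<in>(UNIV::(4\<times>4) set). c q * g q M)"
  shows "f \<in> FS.span (range g)"
proof -
  have "f = (\<Sum>q\<in>UNIV. (\<lambda>M. c q * g q M))"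
    by (simp add: fun_eq_iff fun_sum_apply assms)
  also have "\<dots> \<in> FS.span (range g)"
    by (intro FS.span_sum FS.span_scale FS.span_base) auto
  finally show ?thesis .
qed

lemma xM_span: "xM p \<in> FS.span (range xN)"
proof (rule span_lin)
  fix M :: "complex^4^4"
  have "M = Pinv ** (Pm ** M ** Pinv) ** Pm"
    by (simp add: matrix_mul_assoc[symmetric]) (simp add: matrix_mul_assoc Pinv_P P_Pinv)
  then have "xM p M = (Pinv ** (Pm ** M ** Pinv) ** Pm) $ fst p $ snd p" by (simp add: xM_def)
  also have "\<dots> = (\<Sum>q\<in>UNIV. (Pinv $ fst p $ fst q * Pm $ snd q $ snd p) * xN q M)"
    by (subst entry_expand) (simp add: xN_def)
  finally show "xM p M = (\<Sum>q\<in>UNIV. (Pinv $ fst p $ fst q * Pm $ snd q $ snd p) * xN q M)" .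
qed

lemma xN_span: "xN p \<in> FS.span (range xM)"
proof (rule span_lin)
  fix M :: "complex^4^4"
  show "xN p M = (\<Sum>q\<in>UNIV. (Pm $ fst p $ fst q * Pinv $ snd q $ snd p) * xM q M)"
    by (simp add: xN_def xM_def entry_expand)
qed

lemma mono_fun_restr: "mono_fun_on S \<alpha> = restr S (mon xM \<alpha>)"
  by (simp add: mono_fun_on_def restr_def mon_def xM_def case_prod_unfold fun_eq_iff)

lemma hilbert_fun_G: "hilbert_fun S d = FS.dim (restr S ` Mons xN d)"
proof -
  have A: "mono_fun_on S ` monomials_deg d = restr S ` Mons xM d"
    by (simp add: Mons_def monomials_deg_def image_image mono_fun_restr)
  have "FS.span (restr S ` Mons xM d) = FS.span (restr S ` Mons xN d)"
    unfolding FS.span_eq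
  proof (intro conjI subsetI)
    fix f assume "f \<in> restr S ` Mons xM d"
    then obtain \<alpha> where f: "f = restr S (mon xM \<alpha>)" "sum \<alpha> UNIV = d" by (auto simp: Mons_def)
    have "mon xM \<alpha> \<in> FS.span (Mons xN d)" by (rule mons_change[OF xM_span f(2)])
    then show "f \<in> FS.span (restr S ` Mons xN d)" unfolding f by (rule span_restr)
  next
    fix f assume "f \<in> restr S ` Mons xN d"
    then obtain \<alpha> where f: "f = restr S (mon xN \<alpha>)" "sum \<alpha> UNIV = d" by (auto simp: Mons_def)
    have "mon xN \<alpha> \<in> FS.span (Mons xM d)" by (rule mons_change[OF xN_span f(2)])
    then show "f \<in> FS.span (restr S ` Mons xM d)" unfolding f by (rule span_restr)
  qed
  then show ?thesis unfolding hilbert_fun_def A by (metis FS.dim_span)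
qed

definition kA :: "4 \<times> 4 \<Rightarrow> nat" where "kA p = 2 * hi (fst p) + hi (snd p)"
definition kB :: "4 \<times> 4 \<Rightarrow> nat" where "kB p = 2 * lo (fst p) + lo (snd p)"
definition mA :: "(4 \<times> 4 \<Rightarrow> nat) \<Rightarrow> nat \<Rightarrow> nat" where "mA \<gamma> k = sum \<gamma> {p. kA p = k}"
definition mB :: "(4 \<times> 4 \<Rightarrow> nat) \<Rightarrow> nat \<Rightarrow> nat" where "mB \<gamma> k = sum \<gamma> {p. kB p = k}"

lemma kA_lt: "kA p < 4" and kB_lt: "kB p < 4"
  using hi_lt[of "fst p"] hi_lt[of "snd p"] lo_lt[of "fst p"] lo_lt[of "snd p"]
  by (auto simp: kA_def kB_def)

lemma prod_group_pow:
  fixes a :: "nat \<Rightarrow> complex" and kk :: "4 \<times> 4 \<Rightarrow> nat"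
  assumes "\<And>p. kk p < 4"
  shows "(\<Prod>p\<in>UNIV. a (kk p) ^ \<gamma> p) = (\<Prod>k<4. a k ^ sum \<gamma> {p. kk p = k})"
proof -
  have "(\<Prod>p\<in>UNIV. a (kk p) ^ \<gamma> p) = (\<Prod>k<4. \<Prod>p\<in>{x. x \<in> UNIV \<and> kk x = k}. a (kk p) ^ \<gamma> p)"
    by (rule prod.group[symmetric]) (use assms in auto)
  also have "\<dots> = (\<Prod>k<4. a k ^ sum \<gamma> {p. kk p = k})"
    by (intro prod.cong refl) (simp add: power_sum)
  finally show ?thesis .
qed

lemma mon_xN_kron:
  assumes "Pm ** M ** Pinv = kron a b"
  shows "mon xN \<gamma> M = (\<Prod>k<4. a k ^ mA \<gamma> k) * (\<Prod>l<4. b l ^ mB \<gamma> l)"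
proof -
  have "mon xN \<gamma> M = (\<Prod>p\<in>UNIV. (a (kA p) * b (kB p)) ^ \<gamma> p)"
    by (simp add: mon_def xN_def assms kron_nth kA_def kB_def)
  also have "\<dots> = (\<Prod>p\<in>UNIV. a (kA p) ^ \<gamma> p) * (\<Prod>p\<in>UNIV. b (kB p) ^ \<gamma> p)"
    by (simp add: power_mult_distrib prod.distrib)
  also have "\<dots> = (\<Prod>k<4. a k ^ mA \<gamma> k) * (\<Prod>l<4. b l ^ mB \<gamma> l)"
    unfolding mA_def mB_def by (simp add: prod_group_pow kA_lt kB_lt)
  finally show ?thesis .
qed

definition Kd :: "nat \<Rightarrow> (nat \<Rightarrow> nat) set" where
  "Kd d = {\<beta>. (\<forall>k\<ge>4. \<beta> k = 0) \<and> sum \<beta> {..<4} = d}"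

lemma sum_bump_fin:
  assumes "finite A" "i \<in> A"
  shows "sum (f(i := Suc (f i))) A = Suc (sum f A)"
proof -
  have "sum (f(i := Suc (f i))) A = Suc (f i) + sum f (A - {i})"
    using assms by (subst sum.remove[of _ i]) auto
  also have "\<dots> = Suc (sum f A)"
    using assms by (subst (2) sum.remove[of _ i]) auto
  finally show ?thesis .
qed

lemma sum_bump_out:
  assumes "i \<notin> A"
  shows "sum (f(i := x)) A = sum f A"
  using assms by (intro sum.cong) auto

lemma mA_in: "sum \<gamma> UNIV = d \<Longrightarrow> mA \<gamma> \<in> Kd d"
proof -
  assume d: "sum \<gamma> UNIV = d"
  have "k \<ge> 4 \<Longrightarrow> mA \<gamma> k = 0" for k
    using kA_lt by (auto simp: mA_def intro!: sum.neutral) (metis leD)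
  moreover have "sum (mA \<gamma>) {..<4} = d"
    unfolding mA_def using sum.group[of UNIV "{..<4::nat}" kA \<gamma>] d by (simp add: image_subset_iff kA_lt)
  ultimately show ?thesis by (auto simp: Kd_def)
qed

lemma mB_in: "sum \<gamma> UNIV = d \<Longrightarrow> mB \<gamma> \<in> Kd d"
proof -
  assume d: "sum \<gamma> UNIV = d"
  have "k \<ge> 4 \<Longrightarrow> mB \<gamma> k = 0" for k
    using kB_lt by (auto simp: mB_def intro!: sum.neutral) (metis leD)
  moreover have "sum (mB \<gamma>) {..<4} = d"
    unfolding mB_def using sum.group[of UNIV "{..<4::nat}" kB \<gamma>] d by (simp add: image_subset_iff kB_lt)
  ultimately show ?thesis by (auto simp: Kd_def)
qed

definition idx :: "nat \<Rightarrow> nat \<Rightarrow> 4 \<times> 4" where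
  "idx k l = (of_nat (2 * (k div 2) + l div 2), of_nat (2 * (k mod 2) + l mod 2))"

lemma less4_cases: "(k::nat) < 4 \<Longrightarrow> k = 0 \<or> k = 1 \<or> k = 2 \<or> k = 3" by auto

lemma idx_props: assumes "k < 4" "l < 4" shows "kA (idx k l) = k" "kB (idx k l) = l"
  using less4_cases[OF assms(1)] less4_cases[OF assms(2)]
  by (auto simp: idx_def kA_def kB_def)

lemma mA_bump: "mA (\<gamma>(p := Suc (\<gamma> p))) j = mA \<gamma> j + (if kA p = j then 1 else 0)"
proof (cases "kA p = j")
  case True then show ?thesis unfolding mA_def by (subst sum_bump_fin) auto
next
  case False then show ?thesis unfolding mA_def by (subst sum_bump_out) auto
qed

lemma mB_bump: "mB (\<gamma>(p := Suc (\<gamma> p))) j = mB \<gamma> j + (if kB p = j then 1 else 0)"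
proof (cases "kB p = j")
  case True then show ?thesis unfolding mB_def by (subst sum_bump_fin) auto
next
  case False then show ?thesis unfolding mB_def by (subst sum_bump_out) auto
qed

lemma Kd_dec:
  assumes "\<beta> \<in> Kd (Suc d)"
  obtains k \<beta>1 where "k < 4" "\<beta>1 \<in> Kd d" "\<beta> = \<beta>1(k := Suc (\<beta>1 k))"
proof -
  from assms have b: "\<forall>k\<ge>4. \<beta> k = 0" "sum \<beta> {..<4} = Suc d" by (auto simp: Kd_def)
  then obtain k where k: "k < 4" "\<beta> k > 0"
    by (metis lessThan_iff nat.distinct(1) neq0_conv sum.neutral)
  define \<beta>1 where "\<beta>1 = \<beta>(k := \<beta> k - 1)"
  have e: "\<beta> = \<beta>1(k := Suc (\<beta>1 k))" using k by (auto simp: \<beta>1_def fun_eq_iff)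
  have "sum \<beta>1 {..<4} = d" using b(2) k(1) unfolding e by (subst (asm) sum_bump_fin) auto
  moreover have "\<forall>j\<ge>4. \<beta>1 j = 0" using b(1) k(1) by (auto simp: \<beta>1_def)
  ultimately have "\<beta>1 \<in> Kd d" by (auto simp: Kd_def)
  then show ?thesis using that k(1) e by blast
qed

lemma marg_surj:
  "\<beta> \<in> Kd d \<Longrightarrow> \<beta>' \<in> Kd d \<Longrightarrow> \<exists>\<gamma>. sum \<gamma> UNIV = d \<and> mA \<gamma> = \<beta> \<and> mB \<gamma> = \<beta>'"
proof (induction d arbitrary: \<beta> \<beta>')
  case 0
  then have "\<beta> = (\<lambda>_. 0)" "\<beta>' = (\<lambda>_. 0)"
    by (auto simp: Kd_def fun_eq_iff) (metis not_le lessThan_iff)+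
  then show ?case by (intro exI[of _ "\<lambda>_. 0"]) (auto simp: mA_def mB_def fun_eq_iff)
next
  case (Suc d)
  obtain k \<beta>1 where k: "k < 4" "\<beta>1 \<in> Kd d" "\<beta> = \<beta>1(k := Suc (\<beta>1 k))"
    using Kd_dec[OF Suc.prems(1)] by blast
  obtain l \<beta>1' where l: "l < 4" "\<beta>1' \<in> Kd d" "\<beta>' = \<beta>1'(l := Suc (\<beta>1' l))"
    using Kd_dec[OF Suc.prems(2)] by blast
  obtain \<gamma> where g: "sum \<gamma> UNIV = d" "mA \<gamma> = \<beta>1" "mB \<gamma> = \<beta>1'"
    using Suc.IH[OF k(2) l(2)] by blast
  define p where "p = idx k l"
  have "sum (\<gamma>(p := Suc (\<gamma> p))) UNIV = Suc d" using g(1) by (subst sum_bump_fin) auto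
  moreover have "mA (\<gamma>(p := Suc (\<gamma> p))) = \<beta>"
    using idx_props[OF k(1) l(1)] by (auto simp: fun_eq_iff mA_bump g(2) k(3) p_def)
  moreover have "mB (\<gamma>(p := Suc (\<gamma> p))) = \<beta>'"
    using idx_props[OF k(1) l(1)] by (auto simp: fun_eq_iff mB_bump g(3) l(3) p_def)
  ultimately show ?case by blast
qed

lemma card_Kd: "card (Kd d) = (d + 3) choose d" and finite_Kd: "finite (Kd d)"
proof -
  let ?L = "{l::nat list. size l = 4 \<and> sum_list l = d}"
  have bij: "bij_betw (\<lambda>\<beta>. map \<beta> [0..<4]) (Kd d) ?L"
  proof (rule bij_betw_byWitness[where f' = "\<lambda>l k. if k < 4 then l ! k else 0"])
    show "\<forall>a\<in>Kd d. (\<lambda>k. if k < 4 then map a [0..<4] ! k else 0) = a"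
      by (auto simp: Kd_def fun_eq_iff)
    show "\<forall>a'\<in>?L. map (\<lambda>k. if k < 4 then a' ! k else 0) [0..<4] = a'"
      by (auto intro!: nth_equalityI)
    show "(\<lambda>\<beta>. map \<beta> [0..<4]) ` Kd d \<subseteq> ?L"
      by (auto simp: Kd_def sum_list_distinct_conv_sum_set atLeast0LessThan)
    have "sum (\<lambda>k. if k < 4 then l ! k else 0) {..<4} = sum_list l" if "length l = 4" for l :: "nat list"
      using that by (simp add: sum_list_sum_nth atLeast0LessThan)
    then show "(\<lambda>l k. if k < 4 then l ! k else 0) ` ?L \<subseteq> Kd d"
      by (auto simp: Kd_def)
  qed
  have c: "card (Kd d) = (d + 3) choose d"
    using bij_betw_same_card[OF bij] card_length_sum_list[of 4 d] by (simp add: add.commute)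
  then show "card (Kd d) = (d + 3) choose d" .
  show "finite (Kd d)" using c by (intro card_ge_0_finite) simp
qed

lemma exp_indep:
  fixes u :: "'p \<Rightarrow> complex" and E :: "'p \<Rightarrow> nat"
  assumes fin: "finite K" and inj: "inj_on E K"
    and z: "\<And>t::nat. t \<ge> 2 \<Longrightarrow> (\<Sum>p\<in>K. u p * of_nat t ^ E p) = 0"
  shows "\<forall>p\<in>K. u p = 0"
proof -
  define q where "q = (\<Sum>p\<in>K. monom (u p) (E p))"
  have pq: "poly q x = (\<Sum>p\<in>K. u p * x ^ E p)" for x by (simp add: q_def poly_sum poly_monom)
  have "q = 0"
  proof (rule ccontr)
    assume "q \<noteq> 0"
    then have "finite {x. poly q x = 0}" by (rule poly_roots_finite)
    moreover have "(of_nat ` {2..} :: complex set) \<subseteq> {x. poly q x = 0}" using z pq by auto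
    moreover have "infinite (of_nat ` {2::nat..} :: complex set)"
      using infinite_Ici[of "2::nat"] finite_imageD inj_of_nat inj_on_subset by blast
    ultimately show False by (meson finite_subset)
  qed
  show ?thesis
  proof
    fix p0 assume p0: "p0 \<in> K"
    have "coeff q (E p0) = (\<Sum>p\<in>K. if E p = E p0 then u p else 0)" by (simp add: q_def coeff_sum)
    also have "\<dots> = (\<Sum>p\<in>K. if p = p0 then u p else 0)"
      using inj p0 by (intro sum.cong) (auto simp: inj_on_def)
    also have "\<dots> = u p0" using fin p0 by simp
    finally show "u p0 = 0" using \<open>q = 0\<close> by simp
  qed
qed

lemma digit:
  fixes B x y x' y' :: nat
  assumes "x < B" "x' < B" "x + B * y = x' + B * y'"
  shows "x = x' \<and> y = y'"
proof -
  have B: "B > 0" using assms(1) by simp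
  have "x = (x + B * y) mod B" using assms(1) by simp
  also have "\<dots> = (x' + B * y') mod B" using assms(3) by simp
  also have "\<dots> = x'" using assms(2) by simp
  finally have xx: "x = x'" .
  then show ?thesis using assms(3) B by simp
qed

definition Bs :: "nat \<Rightarrow> nat" where "Bs d = d + 2"
definition Ev :: "nat \<Rightarrow> (nat \<Rightarrow> nat) \<times> (nat \<Rightarrow> nat) \<Rightarrow> nat" where
  "Ev d p = (\<Sum>k<4. Bs d ^ k * fst p k) + (\<Sum>l<4. Bs d ^ (4 + l) * snd p l)"

lemma sum_less4: "sum f {..<4::nat} = f 0 + f 1 + f 2 + f 3"
  by (simp add: eval_nat_numeral)

lemma Ev_horner: "Ev d (\<beta>, \<beta>') = \<beta> 0 + Bs d * (\<beta> 1 + Bs d * (\<beta> 2 + Bs d * (\<beta> 3 + Bs d * (\<beta>' 0 + Bs d * (\<beta>' 1 + Bs d * (\<beta>' 2 + Bs d * \<beta>' 3))))))"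
  by (simp add: Ev_def sum_less4 algebra_simps eval_nat_numeral)

lemma Kd_lt: "\<beta> \<in> Kd d \<Longrightarrow> \<beta> k < Bs d"
proof -
  assume b: "\<beta> \<in> Kd d"
  show ?thesis
  proof (cases "k < 4")
    case True
    then have "\<beta> k \<le> sum \<beta> {..<4}" by (intro member_le_sum) auto
    then show ?thesis using b by (auto simp: Kd_def Bs_def)
  next
    case False then show ?thesis using b by (auto simp: Kd_def Bs_def)
  qed
qed

lemma Ev_inj: "inj_on (Ev d) (Kd d \<times> Kd d)"
proof (rule inj_onI, clarify)
  fix \<beta> \<beta>' \<gamma> \<gamma>' assume m: "\<beta> \<in> Kd d" "\<beta>' \<in> Kd d" "\<gamma> \<in> Kd d" "\<gamma>' \<in> Kd d"
    and e: "Ev d (\<beta>, \<beta>') = Ev d (\<gamma>, \<gamma>')"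
  let ?B = "Bs d"
  note lt = Kd_lt[OF m(1)] Kd_lt[OF m(2)] Kd_lt[OF m(3)] Kd_lt[OF m(4)]
  from e have e0: "\<beta> 0 + ?B * (\<beta> 1 + ?B * (\<beta> 2 + ?B * (\<beta> 3 + ?B * (\<beta>' 0 + ?B * (\<beta>' 1 + ?B * (\<beta>' 2 + ?B * \<beta>' 3)))))) =
     \<gamma> 0 + ?B * (\<gamma> 1 + ?B * (\<gamma> 2 + ?B * (\<gamma> 3 + ?B * (\<gamma>' 0 + ?B * (\<gamma>' 1 + ?B * (\<gamma>' 2 + ?B * \<gamma>' 3))))))"
    by (simp only: Ev_horner)
  from digit[OF lt(1) lt(3) e0] have d0: "\<beta> 0 = \<gamma> 0" and e1: "\<beta> 1 + ?B * (\<beta> 2 + ?B * (\<beta> 3 + ?B * (\<beta>' 0 + ?B * (\<beta>' 1 + ?B * (\<beta>' 2 + ?B * \<beta>' 3))))) =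
     \<gamma> 1 + ?B * (\<gamma> 2 + ?B * (\<gamma> 3 + ?B * (\<gamma>' 0 + ?B * (\<gamma>' 1 + ?B * (\<gamma>' 2 + ?B * \<gamma>' 3)))))" by auto
  from digit[OF lt(1) lt(3) e1] have d1: "\<beta> 1 = \<gamma> 1" and e2: "\<beta> 2 + ?B * (\<beta> 3 + ?B * (\<beta>' 0 + ?B * (\<beta>' 1 + ?B * (\<beta>' 2 + ?B * \<beta>' 3)))) =
     \<gamma> 2 + ?B * (\<gamma> 3 + ?B * (\<gamma>' 0 + ?B * (\<gamma>' 1 + ?B * (\<gamma>' 2 + ?B * \<gamma>' 3))))" by auto
  from digit[OF lt(1) lt(3) e2] have d2: "\<beta> 2 = \<gamma> 2" and e3: "\<beta> 3 + ?B * (\<beta>' 0 + ?B * (\<beta>' 1 + ?B * (\<beta>' 2 + ?B * \<beta>' 3))) =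
     \<gamma> 3 + ?B * (\<gamma>' 0 + ?B * (\<gamma>' 1 + ?B * (\<gamma>' 2 + ?B * \<gamma>' 3)))" by auto
  from digit[OF lt(1) lt(3) e3] have d3: "\<beta> 3 = \<gamma> 3" and e4: "\<beta>' 0 + ?B * (\<beta>' 1 + ?B * (\<beta>' 2 + ?B * \<beta>' 3)) =
     \<gamma>' 0 + ?B * (\<gamma>' 1 + ?B * (\<gamma>' 2 + ?B * \<gamma>' 3))" by auto
  from digit[OF lt(2) lt(4) e4] have d4: "\<beta>' 0 = \<gamma>' 0" and e5: "\<beta>' 1 + ?B * (\<beta>' 2 + ?B * \<beta>' 3) =
     \<gamma>' 1 + ?B * (\<gamma>' 2 + ?B * \<gamma>' 3)" by auto
  from digit[OF lt(2) lt(4) e5] have d5: "\<beta>' 1 = \<gamma>' 1" and e6: "\<beta>' 2 + ?B * \<beta>' 3 = \<gamma>' 2 + ?B * \<gamma>' 3" by auto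
  from digit[OF lt(2) lt(4) e6] have d6: "\<beta>' 2 = \<gamma>' 2" "\<beta>' 3 = \<gamma>' 3" by auto
  have "\<beta> k = \<gamma> k" for k
  proof (cases "k < 4")
    case True then show ?thesis using less4_cases[OF True] d0 d1 d2 d3 by auto
  next
    case False then show ?thesis using m(1,3) by (auto simp: Kd_def)
  qed
  moreover have "\<beta>' k = \<gamma>' k" for k
  proof (cases "k < 4")
    case True then show ?thesis using less4_cases[OF True] d4 d5 d6 by auto
  next
    case False then show ?thesis using m(2,4) by (auto simp: Kd_def)
  qed
  ultimately show "\<beta> = \<gamma> \<and> \<beta>' = \<gamma>'" by (auto simp: fun_eq_iff)
qed

definition aT :: "nat \<Rightarrow> nat \<Rightarrow> nat \<Rightarrow> complex" where "aT d t k = of_nat t ^ (Bs d ^ k)"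
definition bT :: "nat \<Rightarrow> nat \<Rightarrow> nat \<Rightarrow> complex" where "bT d t l = of_nat t ^ (Bs d ^ (4 + l))"
definition Mt :: "nat \<Rightarrow> nat \<Rightarrow> complex^4^4" where "Mt d t = Pinv ** kron (aT d t) (bT d t) ** Pm"

lemma pow_ne:
  assumes "t \<ge> 2" "e1 \<noteq> e2"
  shows "(of_nat t :: complex) ^ e1 \<noteq> of_nat t ^ e2"
proof
  assume "(of_nat t :: complex) ^ e1 = of_nat t ^ e2"
  then have "t ^ e1 = t ^ e2" by (metis of_nat_eq_iff of_nat_power)
  then show False using assms power_inject_exp[of t e1 e2] by simp
qed

lemma exps_ne:
  fixes B :: nat assumes "B \<ge> 2"
  shows "1 + B ^ 3 \<noteq> B + B ^ 2" "B ^ 4 + B ^ 7 \<noteq> B ^ 5 + B ^ 6"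
proof -
  obtain m where m: "B = m + 2" using assms by (metis le_add_diff_inverse2)
  have lt: "B + B ^ 2 < 1 + B ^ 3" unfolding m by (simp add: power3_eq_cube power2_eq_square algebra_simps)
  then show "1 + B ^ 3 \<noteq> B + B ^ 2" by simp
  have "B ^ 4 * (B + B ^ 2) < B ^ 4 * (1 + B ^ 3)" by (rule mult_strict_left_mono[OF lt]) (use assms in simp)
  moreover have "B ^ 4 * (B + B ^ 2) = B ^ 5 + B ^ 6" "B ^ 4 * (1 + B ^ 3) = B ^ 4 + B ^ 7"
    by (simp_all add: eval_nat_numeral algebra_simps)
  ultimately show "B ^ 4 + B ^ 7 \<noteq> B ^ 5 + B ^ 6" by simp
qed

lemma Mt_in: "t \<ge> 2 \<Longrightarrow> Mt d t \<in> cone_SO4_pts"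
  unfolding Mt_def
proof (rule kron_in_cone)
  assume t: "t \<ge> 2"
  have B: "Bs d \<ge> 2" by (simp add: Bs_def)
  have "aT d t 0 * aT d t 3 - aT d t 1 * aT d t 2 = of_nat t ^ (1 + Bs d ^ 3) - of_nat t ^ (Bs d + Bs d ^ 2)"
    by (simp add: aT_def power_add)
  also have "\<dots> \<noteq> 0" using pow_ne[OF t exps_ne(1)[OF B]] by simp
  finally have a: "aT d t 0 * aT d t 3 - aT d t 1 * aT d t 2 \<noteq> 0" .
  have "bT d t 0 * bT d t 3 - bT d t 1 * bT d t 2 = of_nat t ^ (Bs d ^ 4 + Bs d ^ 7) - of_nat t ^ (Bs d ^ 5 + Bs d ^ 6)"
    by (simp add: bT_def power_add)
  also have "\<dots> \<noteq> 0" using pow_ne[OF t exps_ne(2)[OF B]] by simp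
  finally have b: "bT d t 0 * bT d t 3 - bT d t 1 * bT d t 2 \<noteq> 0" .
  show "(aT d t 0 * aT d t 3 - aT d t 1 * aT d t 2) * (bT d t 0 * bT d t 3 - bT d t 1 * bT d t 2) \<noteq> 0"
    using a b by simp
qed

lemma Mt_N: "Pm ** Mt d t ** Pinv = kron (aT d t) (bT d t)"
proof -
  have "Pm ** Mt d t ** Pinv = (Pm ** Pinv) ** kron (aT d t) (bT d t) ** (Pm ** Pinv)"
    by (simp add: Mt_def matrix_mul_assoc)
  then show ?thesis by (simp add: P_Pinv)
qed

lemma prod_pow_sum: "(\<Prod>k\<in>A. (x::complex) ^ f k) = x ^ (\<Sum>k\<in>A. f k)"
  by (simp add: power_sum)

lemma mon_Mt: "mon xN \<gamma> (Mt d t) = of_nat t ^ Ev d (mA \<gamma>, mB \<gamma>)"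
proof -
  have "mon xN \<gamma> (Mt d t) = (\<Prod>k<4. aT d t k ^ mA \<gamma> k) * (\<Prod>l<4. bT d t l ^ mB \<gamma> l)"
    by (rule mon_xN_kron[OF Mt_N])
  also have "\<dots> = of_nat t ^ (\<Sum>k<4. Bs d ^ k * mA \<gamma> k) * of_nat t ^ (\<Sum>l<4. Bs d ^ (4 + l) * mB \<gamma> l)"
    by (simp add: aT_def bT_def power_mult[symmetric] prod_pow_sum)
  also have "\<dots> = of_nat t ^ Ev d (mA \<gamma>, mB \<gamma>)" by (simp add: Ev_def power_add)
  finally show ?thesis .
qed

abbreviation "Sc \<equiv> cone_SO4_pts"

lemma restr_eq:
  assumes "mA \<gamma> = mA \<gamma>'" "mB \<gamma> = mB \<gamma>'"
  shows "restr Sc (mon xN \<gamma>) = restr Sc (mon xN \<gamma>')"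
proof
  fix M
  show "restr Sc (mon xN \<gamma>) M = restr Sc (mon xN \<gamma>') M"
  proof (cases "M \<in> Sc")
    case True
    then obtain a b where "Pm ** M ** Pinv = kron a b" using cone_kron by blast
    then show ?thesis using True assms by (simp add: restr_def mon_xN_kron)
  qed (simp add: restr_def)
qed

definition Pairs :: "nat \<Rightarrow> ((nat \<Rightarrow> nat) \<times> (nat \<Rightarrow> nat)) set" where "Pairs d = Kd d \<times> Kd d"
definition pick :: "nat \<Rightarrow> (nat \<Rightarrow> nat) \<times> (nat \<Rightarrow> nat) \<Rightarrow> (4 \<times> 4 \<Rightarrow> nat)" where
  "pick d p = (SOME \<gamma>. sum \<gamma> UNIV = d \<and> mA \<gamma> = fst p \<and> mB \<gamma> = snd p)"
definition gf :: "nat \<Rightarrow> (nat \<Rightarrow> nat) \<times> (nat \<Rightarrow> nat) \<Rightarrow> complex^4^4 \<Rightarrow> complex" where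
  "gf d p = restr Sc (mon xN (pick d p))"

lemma pick: "p \<in> Pairs d \<Longrightarrow> sum (pick d p) UNIV = d \<and> mA (pick d p) = fst p \<and> mB (pick d p) = snd p"
proof -
  assume "p \<in> Pairs d"
  then have "fst p \<in> Kd d" "snd p \<in> Kd d" by (auto simp: Pairs_def)
  then have "\<exists>\<gamma>. sum \<gamma> UNIV = d \<and> mA \<gamma> = fst p \<and> mB \<gamma> = snd p" by (rule marg_surj)
  then show ?thesis unfolding pick_def by (rule someI_ex)
qed

lemma G_eq: "restr Sc ` Mons xN d = gf d ` Pairs d"
proof (intro equalityI subsetI)
  fix f assume "f \<in> restr Sc ` Mons xN d"
  then obtain \<gamma> where f: "f = restr Sc (mon xN \<gamma>)" and g: "sum \<gamma> UNIV = d" by (auto simp: Mons_def)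
  have p: "(mA \<gamma>, mB \<gamma>) \<in> Pairs d" using mA_in[OF g] mB_in[OF g] by (simp add: Pairs_def)
  have "f = gf d (mA \<gamma>, mB \<gamma>)" unfolding f gf_def using pick[OF p] by (intro restr_eq) auto
  then show "f \<in> gf d ` Pairs d" using p by blast
next
  fix f assume "f \<in> gf d ` Pairs d"
  then obtain p where "p \<in> Pairs d" "f = gf d p" by blast
  then show "f \<in> restr Sc ` Mons xN d" using pick[of p d] by (auto simp: gf_def Mons_def)
qed

lemma gf_eval: "p \<in> Pairs d \<Longrightarrow> t \<ge> 2 \<Longrightarrow> gf d p (Mt d t) = of_nat t ^ Ev d p"
  using pick[of p d] Mt_in[of t d] by (simp add: gf_def restr_def mon_Mt)

lemma gf_inj: "inj_on (gf d) (Pairs d)"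
proof (rule inj_onI)
  fix p q assume pq: "p \<in> Pairs d" "q \<in> Pairs d" "gf d p = gf d q"
  then have "(of_nat 2 :: complex) ^ Ev d p = of_nat 2 ^ Ev d q"
    using gf_eval[of p d 2] gf_eval[of q d 2] by simp
  then have "Ev d p = Ev d q" using pow_ne[of 2 "Ev d p" "Ev d q"] by auto
  then show "p = q" using Ev_inj[of d] pq(1,2) by (auto simp: Pairs_def inj_on_def)
qed

lemma finite_Pairs: "finite (Pairs d)" by (simp add: Pairs_def finite_Kd)

lemma gf_indep: "FS.independent (gf d ` Pairs d)"
proof
  assume dep: "FS.dependent (gf d ` Pairs d)"
  have fin: "finite (gf d ` Pairs d)" using finite_Pairs by simp
  obtain u where u: "\<exists>v\<in>gf d ` Pairs d. u v \<noteq> 0" and s: "(\<Sum>v\<in>gf d ` Pairs d. (\<lambda>x. u v * v x)) = 0"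
    using dep unfolding FS.dependent_finite[OF fin] by blast
  have "(\<Sum>p\<in>Pairs d. u (gf d p) * of_nat t ^ Ev d p) = 0" if t: "t \<ge> 2" for t
  proof -
    have "0 = (\<Sum>v\<in>gf d ` Pairs d. (\<lambda>x. u v * v x)) (Mt d t)" using s by simp
    also have "\<dots> = (\<Sum>p\<in>Pairs d. u (gf d p) * gf d p (Mt d t))"
      by (simp add: fun_sum_apply sum.reindex[OF gf_inj])
    also have "\<dots> = (\<Sum>p\<in>Pairs d. u (gf d p) * of_nat t ^ Ev d p)"
      using t by (intro sum.cong refl) (simp add: gf_eval)
    finally show ?thesis by simp
  qed
  then have "\<forall>p\<in>Pairs d. u (gf d p) = 0"
    by (intro exp_indep[OF finite_Pairs]) (use Ev_inj in \<open>auto simp: Pairs_def\<close>)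
  then show False using u by blast
qed

theorem hilbert_fun_value: "hilbert_fun cone_SO4_pts d = ((d + 3) choose d) ^ 2"
proof -
  have "hilbert_fun cone_SO4_pts d = FS.dim (gf d ` Pairs d)" by (simp add: hilbert_fun_G G_eq)
  also have "\<dots> = card (gf d ` Pairs d)" by (rule FS.dim_eq_card_independent[OF gf_indep])
  also have "\<dots> = card (Pairs d)" by (rule card_image[OF gf_inj])
  also have "\<dots> = ((d + 3) choose d) ^ 2" by (simp add: Pairs_def card_cartesian_product card_Kd power2_eq_square)
  finally show ?thesis .
qed

definition hh :: "nat \<Rightarrow> rat" where "hh n = of_nat (((n + 3) choose n) ^ 2)"

lemma hc: "hh n = ((of_nat n + 1) * (of_nat n + 2) * (of_nat n + 3) / 6)^2"
proof -
  have "(of_nat ((n + 3) choose n) :: rat) = fact (n + 3) / (fact n * fact 3)"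
    by (subst binomial_fact) auto
  also have "\<dots> = (of_nat n + 1) * (of_nat n + 2) * (of_nat n + 3) / 6"
    by (simp add: eval_nat_numeral fact_Suc field_simps)
  finally show ?thesis by (simp add: hh_def)
qed

lemma HD:
  fixes H :: "rat fps"
  shows "H * (1 - fps_X)^7 = H - fps_const 7 * (fps_X^1 * H) + fps_const 21 * (fps_X^2 * H)
    - fps_const 35 * (fps_X^3 * H) + fps_const 35 * (fps_X^4 * H) - fps_const 21 * (fps_X^5 * H)
    + fps_const 7 * (fps_X^6 * H) - fps_X^7 * H"
  by (simp only: numeral_fps_const[symmetric]) algebra

lemma N_nth: "fps_nth ((1 + 9 * fps_X + 9 * fps_X ^ 2 + fps_X ^ 3) :: rat fps) n =
   (if n = 0 then 1 else if n = 1 then 9 else if n = 2 then 9 else if n = 3 then 1 else 0)"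
  by (simp add: numeral_fps_const fps_X_power_nth fps_X_nth)

lemma series_main:
  "Abs_fps hh * (1 - fps_X)^7 = (1 + 9 * fps_X + 9 * fps_X ^ 2 + fps_X ^ 3 :: rat fps)"
proof (rule fps_ext)
  fix n
  have L: "fps_nth (Abs_fps hh * (1 - fps_X)^7) n =
     hh n - 7 * (if n < 1 then 0 else hh (n - 1)) + 21 * (if n < 2 then 0 else hh (n - 2))
     - 35 * (if n < 3 then 0 else hh (n - 3)) + 35 * (if n < 4 then 0 else hh (n - 4))
     - 21 * (if n < 5 then 0 else hh (n - 5)) + 7 * (if n < 6 then 0 else hh (n - 6))
     - (if n < 7 then 0 else hh (n - 7))"
    unfolding HD fps_sub_nth fps_add_nth fps_mult_left_const_nth fps_X_power_mult_nth by simp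
  show "fps_nth (Abs_fps hh * (1 - fps_X)^7) n = fps_nth (1 + 9 * fps_X + 9 * fps_X ^ 2 + fps_X ^ 3 :: rat fps) n"
  proof (cases "n \<ge> 7")
    case True
    then obtain m where m: "n = m + 7" by (metis add.commute le_add_diff_inverse)
    show ?thesis unfolding L N_nth
      by (simp add: m hc eval_nat_numeral field_simps)
  next
    case False
    then have "n = 0 \<or> n = 1 \<or> n = 2 \<or> n = 3 \<or> n = 4 \<or> n = 5 \<or> n = 6" by auto
    then show ?thesis unfolding L N_nth by (auto simp: hc)
  qed
qed

theorem theorem4p4:
  shows "hilbert_series cone_SO4_pts =
    (1 + 9 * fps_X + 9 * fps_X ^ 2 + fps_X ^ 3) / (1 - fps_X) ^ 7"
proof -
  have H: "hilbert_series cone_SO4_pts = Abs_fps hh"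
    unfolding hilbert_series_def hilbert_fun_value hh_def[abs_def] ..
  have nz: "(1 - fps_X :: rat fps) ^ 7 \<noteq> 0" by simp
  show ?thesis unfolding H series_main[symmetric] by (rule fps_divide_times_eq[OF nz, symmetric])
qed

end
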